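(* For every $\bar\mu_0\ge0$ there exist constants $c_k>0$ and $c_{1,k}>0$ (which may depend on $k$, $L$, $a$, $\bar\mu_0$, $d$) such that for all $x,y\in\eta\mathbb Z^d$, $$|G_k(x,y)|\le c_k\,e^{-c_{1,k}|x-y|}.$$
   Context: Setup: $d\ge1$, odd integer $L>1$, integer $k\ge1$, $\eta=L^{-k}$. $\mathcal L^2(\eta\mathbb Z^d)$ has inner product $\eta^d\sum_{x\in\eta\mathbb Z^d}\overline{f(x)}g(x)$. Free Laplacian $(\Delta^\eta f)(x)=\eta^{-2}\sum_{\mu}(f(x+\eta e_\mu)-2f(x)+f(x-\eta e_\mu))$. For $y\in\mathbb Z^d$, $B_k(y)=\{x\in\eta\mathbb Z^d: y_\mu\le x_\mu<y_\mu+1\ \forall\mu\}$; $(Q_kf)(y)=L^{-kd}\sum_{x\in B_k(y)}f(x)$, $(Q_k^*h)(x)=h(y_x)$ with $x\in B_k(y_x)$. Fix $a\in(0,1]$, $a_k=a\frac{1-L^{-2}}{1-L^{-2k}}$, $\bar\mu_k=L^{2k}\bar\mu_0$, and $G_k=(-\Delta^\eta+\bar\mu_k+a_kQ_k^*Q_k)^{-1}$ (a bounded operator). Its kernel is $G_k(x,y)=\langle\delta^\eta_x,G_k\delta^\eta_y\rangle$, where $\delta^\eta_x=\eta^{-d}\mathbb 1_{\{x\}}$. *)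

theory Defs
  imports "HOL-Analysis.Analysis"
begin

text \<open>Points of the lattice eta Z^d are represented by integer vectors n :: int^'d,
  standing for the point x = eta * n.  The dimension d is CARD('d).\<close>

definition eta :: "nat \<Rightarrow> nat \<Rightarrow> real" where
  "eta L k = 1 / real L ^ k"

definition lat_pt :: "real \<Rightarrow> int^'d \<Rightarrow> real^'d" where
  "lat_pt h n = (\<chi> i. h * real_of_int (n $ i))"

definition lap :: "real \<Rightarrow> (int^'d \<Rightarrow> real) \<Rightarrow> int^'d \<Rightarrow> real" where
  "lap h f n = (1 / h^2) * (\<Sum>\<mu>\<in>UNIV. f (n + axis \<mu> 1) - 2 * f n + f (n - axis \<mu> 1))"

definition block :: "nat \<Rightarrow> nat \<Rightarrow> int^'d \<Rightarrow> (int^'d) set" where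
  "block L k y = {n. \<forall>\<mu>. real_of_int (y $ \<mu>) \<le> eta L k * real_of_int (n $ \<mu>)
                        \<and> eta L k * real_of_int (n $ \<mu>) < real_of_int (y $ \<mu>) + 1}"

definition Qk :: "nat \<Rightarrow> nat \<Rightarrow> (int^'d \<Rightarrow> real) \<Rightarrow> int^'d \<Rightarrow> real" where
  "Qk L k f y = (1 / real L ^ (k * CARD('d))) * (\<Sum>n\<in>block L k y. f n)"

definition Qk_adj :: "nat \<Rightarrow> nat \<Rightarrow> (int^'d \<Rightarrow> real) \<Rightarrow> int^'d \<Rightarrow> real" where
  "Qk_adj L k g n = g (THE y. n \<in> block L k y)"

definition a_k :: "nat \<Rightarrow> nat \<Rightarrow> real \<Rightarrow> real" where
  "a_k L k a = a * (1 - real L powi (-2)) / (1 - real L powi (-2 * int k))"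

definition mu_k :: "nat \<Rightarrow> nat \<Rightarrow> real \<Rightarrow> real" where
  "mu_k L k mu0 = real L ^ (2 * k) * mu0"

definition Aop :: "nat \<Rightarrow> nat \<Rightarrow> real \<Rightarrow> real \<Rightarrow> (int^'d \<Rightarrow> real) \<Rightarrow> int^'d \<Rightarrow> real" where
  "Aop L k a mu0 f n = - lap (eta L k) f n + mu_k L k mu0 * f n
                        + a_k L k a * Qk_adj L k (Qk L k f) n"

definition delta_eta :: "real \<Rightarrow> int^'d \<Rightarrow> int^'d \<Rightarrow> real" where
  "delta_eta h m n = (if n = m then 1 / h ^ CARD('d) else 0)"

definition sq_summable :: "(int^'d \<Rightarrow> real) \<Rightarrow> bool" where
  "sq_summable f \<longleftrightarrow> (\<lambda>z. (f z)^2) summable_on UNIV"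

text \<open>Kernel G_k(x,y) = <delta_x, G_k delta_y> = (G_k delta_y)(x), where G_k delta_y is the
  unique L^2 function g with (-Delta + mu_k + a_k Q^*Q) g = delta_y.\<close>
definition Gker :: "nat \<Rightarrow> nat \<Rightarrow> real \<Rightarrow> real \<Rightarrow> int^'d \<Rightarrow> int^'d \<Rightarrow> real" where
  "Gker L k a mu0 n m =
     (THE g. sq_summable g \<and> Aop L k a mu0 g = delta_eta (eta L k) m) n"

end

theory Submission
  imports Defs "HOL-Library.Groups_Big_Fun"
begin

lemma div_iff: "(N::int) > 0 \<Longrightarrow> (n div N = y) = (N*y \<le> n \<and> n < N*y+N)"
proof
  assume a: "N > 0" "n div N = y"
  have "N*(n div N) + n mod N = n" by (simp add: mult_div_mod_eq)
  moreover have "0 \<le> n mod N" "n mod N < N" using a by auto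
  ultimately show "N*y \<le> n \<and> n < N*y+N" using a(2) by (metis add_less_cancel_left le_add_same_cancel1)
next
  assume a: "N > 0" "N*y \<le> n \<and> n < N*y+N"
  then have "(n - N*y) div N = 0" by (intro div_pos_pos_trivial) auto
  moreover have "n div N = ((n - N*y) + y*N) div N" by (simp add: algebra_simps)
  moreover have "\<dots> = (n - N*y) div N + y" using a(1) by (subst div_mult_self1) auto
  ultimately show "n div N = y" by simp
qed

lemma box_eq: "{n::'a^'d. \<forall>\<mu>. n$\<mu> \<in> A \<mu>} = vec_lambda ` (PiE UNIV A)"
proof safe
  fix n :: "'a^'d" assume "\<forall>\<mu>. n$\<mu> \<in> A \<mu>"
  then show "n \<in> vec_lambda ` (PiE UNIV A)"
    by (intro image_eqI[of _ _ "vec_nth n"]) auto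
qed auto

lemma inj_vec_lambda: "inj_on (vec_lambda :: ('d::finite \<Rightarrow> 'a) \<Rightarrow> 'a^'d) X"
  by (metis inj_onI vec_lambda_inverse UNIV_I)

lemma finite_box: "(\<And>\<mu>. finite (A \<mu>)) \<Longrightarrow> finite {n::'a^'d. \<forall>\<mu>. n$\<mu> \<in> A \<mu>}"
  unfolding box_eq by (intro finite_imageI finite_PiE) auto

lemma card_box: "card {n::'a^'d. \<forall>\<mu>. n$\<mu> \<in> A \<mu>} = (\<Prod>\<mu>\<in>UNIV. card (A \<mu>))"
  unfolding box_eq by (subst card_image[OF inj_vec_lambda]) (simp add: card_PiE)

definition blk :: "nat \<Rightarrow> int^'d \<Rightarrow> int^'d" where
  "blk N n = (\<chi> \<mu>. n$\<mu> div int N)"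
definition fib :: "nat \<Rightarrow> int^'d \<Rightarrow> (int^'d) set" where
  "fib N y = {n. blk N n = y}"

lemma fib_iff: "N > 0 \<Longrightarrow> n \<in> fib N y \<longleftrightarrow> (\<forall>\<mu>. int N * y$\<mu> \<le> n$\<mu> \<and> n$\<mu> < int N * y$\<mu> + int N)"
  by (simp add: fib_def blk_def vec_eq_iff div_iff)

lemma fib_box: "N > 0 \<Longrightarrow> fib N y = {n. \<forall>\<mu>. n$\<mu> \<in> {int N * y$\<mu> ..< int N * y$\<mu> + int N}}"
  by (auto simp: fib_iff)

lemma finite_fib: "N > 0 \<Longrightarrow> finite (fib N y)"
  unfolding fib_box by (intro finite_box) auto

lemma card_fib: "N > 0 \<Longrightarrow> card (fib N (y::int^'d)) = N ^ CARD('d)"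
  using card_box[of "\<lambda>\<mu>. {int N * y$\<mu> ..< int N * y$\<mu> + int N}"] by (simp add: fib_box)

lemma blk_fib[simp]: "n \<in> fib N (blk N n)"
  by (simp add: fib_def)

lemma fib_blk: "m \<in> fib N y \<Longrightarrow> blk N m = y"
  by (simp add: fib_def)

definition Pav :: "nat \<Rightarrow> (int^'d \<Rightarrow> real) \<Rightarrow> int^'d \<Rightarrow> real" where
  "Pav N f n = (1 / real N ^ CARD('d)) * (\<Sum>m\<in>fib N (blk N n). f m)"

definition Lap :: "(int^'d \<Rightarrow> real) \<Rightarrow> int^'d \<Rightarrow> real" where
  "Lap f n = (\<Sum>\<mu>\<in>UNIV. f (n + axis \<mu> 1) - 2 * f n + f (n - axis \<mu> 1))"

definition Op :: "nat \<Rightarrow> real \<Rightarrow> real \<Rightarrow> (int^'d \<Rightarrow> real) \<Rightarrow> int^'d \<Rightarrow> real" where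
  "Op N M al f n = - (real N ^ 2) * Lap f n + M * f n + al * Pav N f n"

lemma block_eq:
  fixes y :: "int^'d"
  assumes "L > 0" shows "block L k y = fib (L^k) y"
proof -
  have N: "real (L^k) > 0" using assms by simp
  have "real_of_int (y$\<mu>) \<le> eta L k * real_of_int (n$\<mu>) \<longleftrightarrow> int (L^k) * y$\<mu> \<le> n$\<mu>" for n :: "int^'d" and \<mu> :: 'd
  proof -
    have "real_of_int (y$\<mu>) \<le> eta L k * real_of_int (n$\<mu>) \<longleftrightarrow> real (L^k) * real_of_int (y$\<mu>) \<le> real_of_int (n$\<mu>)"
      using N by (simp add: eta_def field_simps)
    also have "\<dots> \<longleftrightarrow> int (L^k) * y$\<mu> \<le> n$\<mu>"
      by (metis of_int_le_iff of_int_mult of_int_of_nat_eq)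
    finally show ?thesis .
  qed
  moreover have "eta L k * real_of_int (n$\<mu>) < real_of_int (y$\<mu>) + 1 \<longleftrightarrow> n$\<mu> < int (L^k) * y$\<mu> + int (L^k)" for n :: "int^'d" and \<mu> :: 'd
  proof -
    have "eta L k * real_of_int (n$\<mu>) < real_of_int (y$\<mu>) + 1 \<longleftrightarrow> real_of_int (n$\<mu>) < real (L^k) * real_of_int (y$\<mu>) + real (L^k)"
      using N by (simp add: eta_def field_simps)
    also have "\<dots> \<longleftrightarrow> n$\<mu> < int (L^k) * y$\<mu> + int (L^k)"
      by (metis of_int_less_iff of_int_mult of_int_add of_int_of_nat_eq)
    finally show ?thesis .
  qed
  ultimately show ?thesis using assms by (auto simp: block_def fib_iff)
qed

lemma Qk_adj_eq: "L > 0 \<Longrightarrow> Qk_adj L k g n = g (blk (L^k) n)"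
  unfolding Qk_adj_def block_eq
  by (rule arg_cong[where f=g], rule the_equality) (auto simp: fib_def)

lemma Qk_eq: "L > 0 \<Longrightarrow> Qk L k (f :: int^'d \<Rightarrow> real) y = (1 / real (L^k) ^ CARD('d)) * (\<Sum>m\<in>fib (L^k) y. f m)"
  unfolding Qk_def block_eq by (simp add: power_mult)

lemma Aop_eq: "L > 0 \<Longrightarrow> Aop L k a mu0 f = Op (L^k) (mu_k L k mu0) (a_k L k a) f"
  by (auto simp: Aop_def Op_def Qk_adj_eq Qk_eq Pav_def lap_def Lap_def eta_def fun_eq_iff power_one_over)

lemma delta_eq: "L > 0 \<Longrightarrow> delta_eta (eta L k) (m::int^'d) n = (if n = m then real (L^k) ^ CARD('d) else 0)"
  by (simp add: delta_eta_def eta_def power_one_over)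

abbreviation fsup :: "('a \<Rightarrow> real) \<Rightarrow> bool" where "fsup f \<equiv> finite {n. f n \<noteq> 0}"

lemma SA_sup: "finite A \<Longrightarrow> (\<And>n. F n \<noteq> 0 \<Longrightarrow> n \<in> A) \<Longrightarrow> Sum_any F = sum F A"
  by (rule Sum_any.expand_superset) auto

lemma SA_shift: "Sum_any (\<lambda>n. F (n + c)) = Sum_any (F :: 'a::ab_group_add \<Rightarrow> real)"
proof -
  have "bij (\<lambda>n::'a. n + c)" by (rule o_bij[of "\<lambda>n. n - c"]) (auto simp: fun_eq_iff)
  then show ?thesis by (intro Sum_any.reindex_cong[symmetric]) (auto simp: o_def)
qed

lemma SA_add: "fsup F \<Longrightarrow> fsup G \<Longrightarrow> Sum_any (\<lambda>n. F n + G n) = Sum_any F + Sum_any G"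
  by (rule Sum_any.distrib)

lemma fsup_minus: "fsup G \<Longrightarrow> fsup (\<lambda>n. - G n)" by simp

lemma SA_uminus: "fsup G \<Longrightarrow> Sum_any (\<lambda>n. - G n) = - Sum_any G"
proof -
  assume "fsup G"
  then show ?thesis
    using SA_sup[of "{n. G n \<noteq> 0}" G] SA_sup[of "{n. G n \<noteq> 0}" "\<lambda>n. - G n"]
    by (simp add: sum_negf)
qed

lemma SA_diff: "fsup F \<Longrightarrow> fsup G \<Longrightarrow> Sum_any (\<lambda>n. F n - G n) = Sum_any F - Sum_any G"
  using SA_add[of F "\<lambda>n. - G n"] SA_uminus[of G] by simp

lemma SA_cmult: "fsup F \<Longrightarrow> Sum_any (\<lambda>n. c * F n) = c * Sum_any F"
  by (simp add: Sum_any_right_distrib)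

lemma SA_mono: "fsup F \<Longrightarrow> fsup G \<Longrightarrow> (\<And>n. F n \<le> G n) \<Longrightarrow> Sum_any F \<le> Sum_any G"
proof -
  assume a: "fsup F" "fsup G" "\<And>n. F n \<le> G n"
  let ?A = "{n. F n \<noteq> 0} \<union> {n. G n \<noteq> 0}"
  have "Sum_any F = sum F ?A" "Sum_any G = sum G ?A" using a by (auto intro!: SA_sup)
  then show ?thesis using a by (auto intro: sum_mono)
qed

lemma SA_nonneg: "(\<And>n. 0 \<le> F n) \<Longrightarrow> 0 \<le> Sum_any (F::'a \<Rightarrow> real)"
  by (cases "fsup F") (auto simp: Sum_any.expand_set intro: sum_nonneg)

lemma SA_sum: "finite I \<Longrightarrow> (\<And>i. i \<in> I \<Longrightarrow> fsup (F i)) \<Longrightarrow>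
   Sum_any (\<lambda>n. \<Sum>i\<in>I. F i n) = (\<Sum>i\<in>I. Sum_any (F i))"
proof (induction I rule: finite_induct)
  case (insert x I)
  have "fsup (\<lambda>n. \<Sum>i\<in>I. F i n)"
  proof (rule finite_subset)
    show "{n. (\<Sum>i\<in>I. F i n) \<noteq> 0} \<subseteq> (\<Union>i\<in>I. {n. F i n \<noteq> 0})"
      by (auto elim: sum.not_neutral_contains_not_neutral)
  qed (use insert in auto)
  then show ?case using insert by (simp add: SA_add)
qed simp

lemma SA_le_sum: "finite A \<Longrightarrow> (\<And>n. 0 \<le> F n) \<Longrightarrow> fsup F \<Longrightarrow> sum F A \<le> Sum_any (F :: 'a \<Rightarrow> real)"
proof -
  assume a: "finite A" "\<And>n. 0 \<le> F n" "fsup F"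
  have "Sum_any F = sum F (A \<union> {n. F n \<noteq> 0})" using a by (intro SA_sup) auto
  moreover have "sum F A \<le> sum F (A \<union> {n. F n \<noteq> 0})" using a by (intro sum_mono2) auto
  ultimately show ?thesis by simp
qed

definition l1 :: "int^'d \<Rightarrow> int^'d \<Rightarrow> int" where
  "l1 n m = (\<Sum>\<mu>\<in>UNIV. \<bar>n$\<mu> - m$\<mu>\<bar>)"

lemma l1_sym: "l1 n m = l1 m n" by (simp add: l1_def abs_minus_commute)
lemma l1_tri: "l1 n m \<le> l1 n p + l1 p m"
  unfolding l1_def sum.distrib[symmetric] by (intro sum_mono) (simp add: abs_triangle_ineq4[of "n$_ - p$_" "m$_ - p$_", simplified] abs_diff_triangle_ineq)
lemma l1_nonneg: "0 \<le> l1 n m" by (simp add: l1_def sum_nonneg)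
lemma l1_self[simp]: "l1 n n = 0" by (simp add: l1_def)
lemma coord_le_l1: "\<bar>n$\<mu> - m$\<mu>\<bar> \<le> l1 n m"
  unfolding l1_def by (rule member_le_sum) auto

lemma l1_axis: "l1 (n + axis \<mu> 1) n = 1" "l1 (n - axis \<mu> 1) n = 1"
  by (simp_all add: l1_def axis_def)

lemma finite_ball: "finite {n. l1 n m \<le> r}"
proof (rule finite_subset)
  show "{n. l1 n m \<le> r} \<subseteq> {n. \<forall>\<mu>. n$\<mu> \<in> {m$\<mu> - r .. m$\<mu> + r}}"
  proof safe
    fix n \<mu> assume "l1 n m \<le> r"
    then have "\<bar>n$\<mu> - m$\<mu>\<bar> \<le> r" using coord_le_l1[of n \<mu> m] by linarith
    then show "n$\<mu> \<in> {m$\<mu> - r .. m$\<mu> + r}" by (auto simp: abs_le_iff)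
  qed
qed (intro finite_box, simp)

lemma l1_fib: fixes m n :: "int^'d" assumes "N > 0" "m \<in> fib N (blk N n)" shows "l1 m n \<le> int (CARD('d) * N)"
proof -
  have bnd: "\<bar>m$\<mu> - n$\<mu>\<bar> \<le> int N" for \<mu>
  proof -
    have "int N * blk N n$\<mu> \<le> m$\<mu> \<and> m$\<mu> < int N * blk N n$\<mu> + int N"
      using assms fib_iff[OF assms(1), of m "blk N n"] by blast
    moreover have "int N * blk N n$\<mu> \<le> n$\<mu> \<and> n$\<mu> < int N * blk N n$\<mu> + int N"
      using blk_fib[of n N] fib_iff[OF assms(1), of n "blk N n"] by blast
    ultimately show ?thesis by linarith
  qed
  have "l1 m n \<le> (\<Sum>\<mu>\<in>(UNIV::'d set). int N)" unfolding l1_def by (rule sum_mono) (rule bnd)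
  then show ?thesis by simp
qed

lemma RR_ge1: "N > 0 \<Longrightarrow> 1 \<le> int (CARD('d::finite) * N)"
proof -
  assume "N > 0"
  then have "0 < CARD('d) * N" by simp
  then show ?thesis by linarith
qed

lemma Op_local:
  fixes f g :: "int^'d \<Rightarrow> real"
  assumes N: "N > 0" and eq: "\<And>m. l1 m n \<le> int (CARD('d) * N) \<Longrightarrow> f m = g m"
  shows "Op N M al f n = Op N M al g n"
proof -
  have r1: "1 \<le> int (CARD('d) * N)" using RR_ge1[OF N] .
  have "f (n + axis \<mu> 1) = g (n + axis \<mu> 1)" "f (n - axis \<mu> 1) = g (n - axis \<mu> 1)" for \<mu>
    using eq[of "n + axis \<mu> 1"] eq[of "n - axis \<mu> 1"] l1_axis[of n \<mu>] r1 by auto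
  then have "Lap f n = Lap g n" unfolding Lap_def using eq[of n] by simp
  moreover have "Pav N f n = Pav N g n" unfolding Pav_def
    using eq l1_fib[OF N] by (intro arg_cong[where f="\<lambda>x. _ * x"] sum.cong) auto
  ultimately show ?thesis by (simp add: Op_def eq)
qed

lemma Op_zero: "Op N M al (\<lambda>n. 0) n = 0"
  by (simp add: Op_def Lap_def Pav_def)

lemma Op_supp:
  fixes f :: "int^'d \<Rightarrow> real"
  assumes "N > 0" "Op N M al f n \<noteq> 0"
  shows "\<exists>m. l1 m n \<le> int (CARD('d) * N) \<and> f m \<noteq> 0"
  using Op_local[OF assms(1), of n f "\<lambda>n. 0" M al] assms(2) Op_zero by metis

lemma Pav_supp:
  fixes f :: "int^'d \<Rightarrow> real"
  assumes "N > 0" "Pav N f n \<noteq> 0"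
  shows "\<exists>m. l1 m n \<le> int (CARD('d) * N) \<and> f m \<noteq> 0"
proof (rule ccontr)
  assume "\<not> ?thesis"
  then have "Pav N f n = 0" unfolding Pav_def using l1_fib[OF assms(1)] by (auto intro!: sum.neutral)
  then show False using assms by simp
qed

lemma fsup_local:
  fixes F f :: "int^'d \<Rightarrow> real"
  assumes "fsup f" "\<And>n. F n \<noteq> 0 \<Longrightarrow> \<exists>m. l1 m n \<le> R \<and> f m \<noteq> 0"
  shows "fsup F"
proof (rule finite_subset)
  show "{n. F n \<noteq> 0} \<subseteq> (\<Union>m\<in>{m. f m \<noteq> 0}. {n. l1 n m \<le> R})"
  proof
    fix n assume "n \<in> {n. F n \<noteq> 0}"
    then obtain m where "l1 m n \<le> R" "f m \<noteq> 0" using assms(2) by auto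
    then show "n \<in> (\<Union>m\<in>{m. f m \<noteq> 0}. {n. l1 n m \<le> R})" by (auto simp: l1_sym[of n m])
  qed
  show "finite (\<Union>m\<in>{m. f m \<noteq> 0}. {n. l1 n m \<le> R})"
    using assms(1) by (intro finite_UN_I) (auto simp: finite_ball)
qed

lemma fsup_Op: "N > 0 \<Longrightarrow> fsup (f::int^'d \<Rightarrow> real) \<Longrightarrow> fsup (Op N M al f)"
  by (rule fsup_local[where f=f], assumption, rule Op_supp)

lemma fsup_Pav: "N > 0 \<Longrightarrow> fsup (f::int^'d \<Rightarrow> real) \<Longrightarrow> fsup (Pav N f)"
  by (rule fsup_local[where f=f], assumption, rule Pav_supp)

lemma fsup_shift: "fsup (f::int^'d \<Rightarrow> real) \<Longrightarrow> fsup (\<lambda>n. f (n + c))"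
proof -
  assume a: "fsup f"
  have "{n. f (n + c) \<noteq> 0} = (\<lambda>m. m - c) ` {m. f m \<noteq> 0}"
    by (auto simp: image_iff) (metis add_diff_cancel)
  then show ?thesis using a by simp
qed

lemma fsup_shift': "fsup (f::int^'d \<Rightarrow> real) \<Longrightarrow> fsup (\<lambda>n. f (n - c))"
  using fsup_shift[of f "-c"] by simp

lemma fsup_mult_l: "fsup f \<Longrightarrow> fsup (\<lambda>n. f n * g n)"
  by (rule finite_subset[of _ "{n. f n \<noteq> 0}"]) auto
lemma fsup_mult_r: "fsup g \<Longrightarrow> fsup (\<lambda>n. f n * g n)"
  by (rule finite_subset[of _ "{n. g n \<noteq> 0}"]) auto
lemma fsup_add: "fsup f \<Longrightarrow> fsup g \<Longrightarrow> fsup (\<lambda>n. f n + g n)"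
  by (rule finite_subset[of _ "{n. f n \<noteq> 0} \<union> {n. g n \<noteq> 0}"]) auto
lemma fsup_diff: "fsup f \<Longrightarrow> fsup g \<Longrightarrow> fsup (\<lambda>n. f n - g n)"
  by (rule finite_subset[of _ "{n. f n \<noteq> 0} \<union> {n. g n \<noteq> 0}"]) auto
lemma fsup_sq: "fsup f \<Longrightarrow> fsup (\<lambda>n. (f n)\<^sup>2)"
  by (rule finite_subset[of _ "{n. f n \<noteq> 0}"]) auto

lemma Lap_add: "Lap (\<lambda>n. f n + g n) n = Lap f n + Lap g n"
  by (simp add: Lap_def sum.distrib[symmetric] algebra_simps)
lemma Pav_add: "Pav N (\<lambda>n. f n + g n) n = Pav N f n + Pav N g n"
  by (simp add: Pav_def sum.distrib algebra_simps)
lemma Op_add: "Op N M al (\<lambda>n. f n + g n) n = Op N M al f n + Op N M al g n"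
  by (simp add: Op_def Lap_add Pav_add algebra_simps)
lemma Lap_cmult: "Lap (\<lambda>n. c * f n) n = c * Lap f n"
  by (simp add: Lap_def sum_distrib_left algebra_simps)
lemma Pav_cmult: "Pav N (\<lambda>n. c * f n) n = c * Pav N f n"
  unfolding Pav_def by (metis (no_types) sum_distrib_left mult.left_commute)
lemma Op_cmult: "Op N M al (\<lambda>n. c * f n) n = c * Op N M al f n"
  by (simp add: Op_def Lap_cmult Pav_cmult algebra_simps)
lemma Op_diff: "Op N M al (\<lambda>n. f n - g n) n = Op N M al f n - Op N M al g n"
  using Op_add[of N M al f "\<lambda>n. (-1) * g n" n] Op_cmult[of N M al "-1" g n] by simp

lemma Op_sum: "finite J \<Longrightarrow> Op N M al (\<lambda>n. \<Sum>j\<in>J. F j n) x = (\<Sum>j\<in>J. Op N M al (F j) x)"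
proof (induction J rule: finite_induct)
  case empty then show ?case by (simp add: Op_zero)
next
  case (insert i J)
  have "Op N M al (\<lambda>n. \<Sum>j\<in>insert i J. F j n) x = Op N M al (\<lambda>n. F i n + (\<Sum>j\<in>J. F j n)) x"
    using insert(1,2) by simp
  also have "\<dots> = Op N M al (\<lambda>n. F i n) x + Op N M al (\<lambda>n. \<Sum>j\<in>J. F j n) x" by (rule Op_add)
  also have "\<dots> = Op N M al (F i) x + (\<Sum>j\<in>J. Op N M al (F j) x)" using insert(3) by simp
  also have "\<dots> = (\<Sum>j\<in>insert i J. Op N M al (F j) x)" using insert(1,2) by simp
  finally show ?case .
qed

lemma Op_tendsto:
  assumes "\<And>n. ((\<lambda>J. F J n) \<longlongrightarrow> f n) sequentially"
  shows "((\<lambda>J. Op N M al (F J) n) \<longlongrightarrow> Op N M al f n) sequentially"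
proof -
  have L: "((\<lambda>J. Lap (F J) n) \<longlongrightarrow> Lap f n) sequentially" unfolding Lap_def
    by (intro tendsto_sum tendsto_add tendsto_diff tendsto_mult_left assms)
  have P: "((\<lambda>J. Pav N (F J) n) \<longlongrightarrow> Pav N f n) sequentially" unfolding Pav_def
    by (intro tendsto_sum tendsto_mult_left assms)
  show ?thesis unfolding Op_def
    by (intro tendsto_add tendsto_mult_left L P assms)
qed

lemma SA_telescope: "fsup (G::int^'d \<Rightarrow> real) \<Longrightarrow> Sum_any (\<lambda>n. G (n + c) - G n) = 0"
  by (simp add: SA_diff fsup_shift SA_shift)

lemma lap_form:
  fixes f :: "int^'d \<Rightarrow> real" assumes f: "fsup f"
  shows "Sum_any (\<lambda>n. f n * Lap f n) = - Sum_any (\<lambda>n. \<Sum>\<mu>\<in>UNIV. (f (n + axis \<mu> 1) - f n)\<^sup>2)"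
proof -
  define e where "e \<mu> = (axis \<mu> 1 :: int^'d)" for \<mu>
  define A where "A \<mu> n = f n * (f (n + e \<mu>) - 2 * f n + f (n - e \<mu>))" for \<mu> n
  define B where "B \<mu> n = (f (n + e \<mu>) - f n)\<^sup>2" for \<mu> n
  have 1: "f n * Lap f n = (\<Sum>\<mu>\<in>UNIV. A \<mu> n)" for n by (simp add: Lap_def e_def A_def sum_distrib_left)
  have fsA: "fsup (A \<mu>)" for \<mu> unfolding A_def using f by (rule fsup_mult_l)
  have fsB: "fsup (B \<mu>)" for \<mu> unfolding B_def using f by (intro fsup_sq fsup_diff fsup_shift)
  have 2: "Sum_any (A \<mu>) = - Sum_any (B \<mu>)" for \<mu>
  proof -
    define H1 where "H1 n = (f n)\<^sup>2" for n
    define H2 where "H2 n = f n * f (n - e \<mu>)" for n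
    have pw: "A \<mu> n + B \<mu> n = (H1 (n + e \<mu>) - H1 n) - (H2 (n + e \<mu>) - H2 n)" for n
      by (simp add: A_def B_def H1_def H2_def power2_eq_square algebra_simps)
    have fs1: "fsup H1" "fsup H2" unfolding H1_def H2_def using f by (auto intro: fsup_sq fsup_mult_l)
    have "Sum_any (A \<mu>) + Sum_any (B \<mu>) = Sum_any (\<lambda>n. A \<mu> n + B \<mu> n)"
      using fsA fsB by (simp add: SA_add)
    also have "\<dots> = Sum_any (\<lambda>n. (H1 (n + e \<mu>) - H1 n) - (H2 (n + e \<mu>) - H2 n))" by (simp only: pw)
    also have "\<dots> = Sum_any (\<lambda>n. H1 (n + e \<mu>) - H1 n) - Sum_any (\<lambda>n. H2 (n + e \<mu>) - H2 n)"
      using fs1 by (intro SA_diff fsup_diff fsup_shift)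
    also have "\<dots> = 0" using fs1 by (simp add: SA_telescope)
    finally show ?thesis by simp
  qed
  have "Sum_any (\<lambda>n. f n * Lap f n) = Sum_any (\<lambda>n. \<Sum>\<mu>\<in>UNIV. A \<mu> n)" by (simp only: 1)
  also have "\<dots> = (\<Sum>\<mu>\<in>UNIV. Sum_any (A \<mu>))" using fsA by (intro SA_sum) auto
  also have "\<dots> = - (\<Sum>\<mu>\<in>UNIV. Sum_any (B \<mu>))" by (simp add: 2 sum_negf)
  also have "(\<Sum>\<mu>\<in>UNIV. Sum_any (B \<mu>)) = Sum_any (\<lambda>n. \<Sum>\<mu>\<in>UNIV. B \<mu> n)"
    using fsB by (intro SA_sum[symmetric]) auto
  finally show ?thesis by (simp add: e_def B_def)
qed

definition fibclos :: "nat \<Rightarrow> (int^'d) set \<Rightarrow> (int^'d) set" where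
  "fibclos N S = {n. blk N n \<in> blk N ` S}"

lemma finite_fibclos: "N > 0 \<Longrightarrow> finite S \<Longrightarrow> finite (fibclos N S)"
proof -
  assume a: "N > 0" "finite S"
  have "fibclos N S = (\<Union>y\<in>blk N ` S. fib N y)" by (auto simp: fibclos_def fib_def)
  then show ?thesis using a by (auto intro: finite_fib)
qed

lemma in_fibclos: "n \<in> S \<Longrightarrow> n \<in> fibclos N S" by (auto simp: fibclos_def)

lemma fib_sub_clos: "n \<in> fibclos N S \<Longrightarrow> fib N (blk N n) \<subseteq> fibclos N S"
  by (auto simp: fibclos_def fib_def)

lemma Pav_W:
  fixes n :: "int^'d"
  assumes "fib N (blk N n) \<subseteq> W" "finite W"
  shows "Pav N f n = (1 / real N ^ CARD('d)) * (\<Sum>m\<in>W. if blk N m = blk N n then f m else 0)"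
proof -
  have "{m\<in>W. blk N m = blk N n} = fib N (blk N (n::int^'d))" using assms(1) by (auto simp: fib_def)
  then show ?thesis unfolding Pav_def using sum.inter_filter[OF assms(2), of f "\<lambda>m. blk N m = blk N n"]
    by simp
qed

lemma Pav_supp_clos:
  assumes "Pav N f n \<noteq> 0" shows "n \<in> fibclos N {n. f n \<noteq> 0}"
proof -
  from assms have "(\<Sum>m\<in>fib N (blk N n). f m) \<noteq> 0" by (auto simp: Pav_def)
  then obtain m where "m \<in> fib N (blk N n)" "f m \<noteq> 0" by (meson sum.not_neutral_contains_not_neutral)
  then show ?thesis by (auto simp: fibclos_def fib_def image_iff)
qed

lemma sum_if_mult1: "(\<Sum>m\<in>W. c * (if P m then a * u m else 0)) = a * (c * (\<Sum>m\<in>W. if P m then u m else (0::real)))"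
  unfolding sum_distrib_left by (rule sum.cong) auto

lemma sum_if_mult2: "(\<Sum>n\<in>W. c * (if P n then phi n * a else 0)) = (c * (\<Sum>n\<in>W. if P n then phi n else (0::real))) * a"
  unfolding sum_distrib_left sum_distrib_right by (rule sum.cong) auto

lemma Pav_sym:
  fixes phi u :: "int^'d \<Rightarrow> real"
  assumes N: "N > 0" and fp: "fsup phi"
  shows "Sum_any (\<lambda>n. phi n * Pav N u n) = Sum_any (\<lambda>n. Pav N phi n * u n)"
proof -
  define W where "W = fibclos N {n. phi n \<noteq> 0}"
  define c where "c = 1 / real N ^ CARD('d)"
  have fW: "finite W" unfolding W_def using N fp by (rule finite_fibclos)
  have subW: "n \<in> W \<Longrightarrow> fib N (blk N n) \<subseteq> W" for n unfolding W_def by (rule fib_sub_clos)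
  have "Sum_any (\<lambda>n. phi n * Pav N u n) = (\<Sum>n\<in>W. phi n * Pav N u n)"
    using fW by (rule SA_sup) (auto simp: W_def intro: in_fibclos)
  also have "\<dots> = (\<Sum>n\<in>W. \<Sum>m\<in>W. c * (if blk N m = blk N n then phi n * u m else 0))"
    by (intro sum.cong refl) (simp only: Pav_W[OF subW fW] c_def sum_if_mult1)
  also have "\<dots> = (\<Sum>m\<in>W. \<Sum>n\<in>W. c * (if blk N m = blk N n then phi n * u m else 0))"
    by (rule sum.swap)
  also have "\<dots> = (\<Sum>n\<in>W. Pav N phi n * u n)"
  proof (intro sum.cong refl)
    fix m assume m: "m \<in> W"
    have "(\<Sum>n\<in>W. if blk N m = blk N n then phi n else 0) = (\<Sum>n\<in>W. if blk N n = blk N m then phi n else 0)"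
      by (rule sum.cong) auto
    then show "(\<Sum>n\<in>W. c * (if blk N m = blk N n then phi n * u m else 0)) = Pav N phi m * u m"
      by (simp only: sum_if_mult2 Pav_W[OF subW[OF m] fW] c_def)
  qed
  also have "\<dots> = Sum_any (\<lambda>n. Pav N phi n * u n)"
    using fW by (intro SA_sup[symmetric]) (auto simp: W_def dest: Pav_supp_clos)
  finally show ?thesis .
qed

lemma Pav_idem: assumes N: "N > 0" shows "Pav N (Pav N f) n = Pav N (f::int^'d \<Rightarrow> real) n"
proof -
  have c: "card (fib N (blk N n)) = N ^ CARD('d)" by (rule card_fib[OF N])
  have eqP: "Pav N f m = Pav N f n" if "m \<in> fib N (blk N n)" for m
    using that unfolding Pav_def fib_def by simp
  have "(\<Sum>m\<in>fib N (blk N n). Pav N f m) = (\<Sum>m\<in>fib N (blk N n). Pav N f n)"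
    by (rule sum.cong[OF refl eqP])
  also have "\<dots> = real (card (fib N (blk N n))) * Pav N f n"
    by (rule sum_constant)
  also have "\<dots> = real N ^ CARD('d) * Pav N f n" using c by simp
  finally have S: "(\<Sum>m\<in>fib N (blk N n). Pav N f m) = real N ^ CARD('d) * Pav N f n" .
  show ?thesis using N S unfolding Pav_def[of N "Pav N f"] by simp
qed

lemma Pav_form:
  fixes f :: "int^'d \<Rightarrow> real"
  assumes N: "N > 0" and f: "fsup f"
  shows "Sum_any (\<lambda>n. f n * Pav N f n) = Sum_any (\<lambda>n. (Pav N f n)\<^sup>2)"
proof -
  have "Sum_any (\<lambda>n. f n * Pav N f n) = Sum_any (\<lambda>n. f n * Pav N (Pav N f) n)"
    by (simp add: Pav_idem[OF N])
  also have "\<dots> = Sum_any (\<lambda>n. Pav N f n * Pav N f n)" by (rule Pav_sym[OF N f])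
  finally show ?thesis by (simp add: power2_eq_square)
qed

lemma axis_nth: "axis \<mu> (1::int) $ \<nu> = (if \<nu> = \<mu> then 1 else 0)" by (simp add: axis_def)

lemma l1_zero: "l1 x y = 0 \<Longrightarrow> x = y"
proof -
  assume "l1 x y = 0"
  then have "\<forall>\<mu>\<in>UNIV. \<bar>x$\<mu> - y$\<mu>\<bar> = 0" unfolding l1_def
    by (subst sum_nonneg_eq_0_iff[symmetric]) auto
  then show ?thesis by (simp add: vec_eq_iff)
qed

lemma l1_step_plus: "x$\<mu> < y$\<mu> \<Longrightarrow> l1 (x + axis \<mu> 1) y = l1 x y - 1"
proof -
  assume a: "x$\<mu> < y$\<mu>"
  have "\<bar>(x + axis \<mu> 1)$\<nu> - y$\<nu>\<bar> = \<bar>x$\<nu> - y$\<nu>\<bar> - (if \<nu> = \<mu> then 1 else 0)" for \<nu>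
    using a by (cases "\<nu> = \<mu>") (auto simp: axis_nth)
  then have "l1 (x + axis \<mu> 1) y = (\<Sum>\<nu>\<in>UNIV. \<bar>x$\<nu> - y$\<nu>\<bar> - (if \<nu> = \<mu> then 1 else 0))"
    unfolding l1_def by simp
  also have "\<dots> = l1 x y - 1" unfolding l1_def sum_subtractf by simp
  finally show ?thesis .
qed

lemma l1_step_minus: "y$\<mu> < x$\<mu> \<Longrightarrow> l1 (x - axis \<mu> 1) y = l1 x y - 1"
proof -
  assume a: "y$\<mu> < x$\<mu>"
  have "\<bar>(x - axis \<mu> 1)$\<nu> - y$\<nu>\<bar> = \<bar>x$\<nu> - y$\<nu>\<bar> - (if \<nu> = \<mu> then 1 else 0)" for \<nu>
    using a by (cases "\<nu> = \<mu>") (auto simp: axis_nth)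
  then have "l1 (x - axis \<mu> 1) y = (\<Sum>\<nu>\<in>UNIV. \<bar>x$\<nu> - y$\<nu>\<bar> - (if \<nu> = \<mu> then 1 else 0))"
    unfolding l1_def by simp
  also have "\<dots> = l1 x y - 1" unfolding l1_def sum_subtractf by simp
  finally show ?thesis .
qed

lemma fib_between:
  assumes N: "N > 0" and x: "x \<in> fib N b" and y: "y \<in> fib N b"
    and z: "\<And>\<nu>. (x$\<nu> \<le> z$\<nu> \<and> z$\<nu> \<le> y$\<nu>) \<or> (y$\<nu> \<le> z$\<nu> \<and> z$\<nu> \<le> x$\<nu>)"
  shows "z \<in> fib N b"
  unfolding fib_iff[OF N]
proof
  fix \<nu>
  have "int N * b$\<nu> \<le> x$\<nu> \<and> x$\<nu> < int N * b$\<nu> + int N" using x unfolding fib_iff[OF N] by blast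
  moreover have "int N * b$\<nu> \<le> y$\<nu> \<and> y$\<nu> < int N * b$\<nu> + int N" using y unfolding fib_iff[OF N] by blast
  ultimately show "int N * b$\<nu> \<le> z$\<nu> \<and> z$\<nu> < int N * b$\<nu> + int N"
    using z[of \<nu>] by (elim disjE) linarith+
qed

lemma lip_fib:
  fixes f :: "int^'d \<Rightarrow> real"
  assumes N: "N > 0"
    and st: "\<And>z \<mu>. z \<in> fib N b \<Longrightarrow> z + axis \<mu> 1 \<in> fib N b \<Longrightarrow> \<bar>f (z + axis \<mu> 1) - f z\<bar> \<le> s"
  shows "x \<in> fib N b \<Longrightarrow> y \<in> fib N b \<Longrightarrow> \<bar>f x - f y\<bar> \<le> real_of_int (l1 x y) * s"
proof (induction "nat (l1 x y)" arbitrary: x)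
  case 0
  then have "l1 x y = 0" using l1_nonneg[of x y] by simp
  then have "x = y" by (rule l1_zero)
  then show ?case by simp
next
  case (Suc k)
  have "x \<noteq> y" using Suc.hyps(2) by auto
  then obtain \<mu> where mu: "x$\<mu> \<noteq> y$\<mu>" by (auto simp: vec_eq_iff)
  have tri: "\<bar>f x - f y\<bar> \<le> \<bar>f x' - f x\<bar> + \<bar>f x' - f y\<bar>" for x' by linarith
  show ?case
  proof (cases "x$\<mu> < y$\<mu>")
    case True
    define x' where "x' = x + axis \<mu> 1"
    have x'in: "x' \<in> fib N b"
      by (rule fib_between[OF N Suc.prems(1) Suc.prems(2)]) (use True in \<open>auto simp: x'_def axis_nth\<close>)
    have l: "l1 x' y = l1 x y - 1" using True by (simp add: x'_def l1_step_plus)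
    then have "k = nat (l1 x' y)" using Suc.hyps(2) by simp
    then have IH: "\<bar>f x' - f y\<bar> \<le> real_of_int (l1 x' y) * s" using Suc.hyps(1) x'in Suc.prems(2) by blast
    have "\<bar>f x' - f x\<bar> \<le> s" using st[OF Suc.prems(1)] x'in by (simp add: x'_def)
    then show ?thesis using IH tri[of x'] l by (simp add: algebra_simps)
  next
    case False
    then have F: "y$\<mu> < x$\<mu>" using mu by simp
    define x' where "x' = x - axis \<mu> 1"
    have x'in: "x' \<in> fib N b"
      by (rule fib_between[OF N Suc.prems(1) Suc.prems(2)]) (use F in \<open>auto simp: x'_def axis_nth\<close>)
    have l: "l1 x' y = l1 x y - 1" using F by (simp add: x'_def l1_step_minus)
    then have "k = nat (l1 x' y)" using Suc.hyps(2) by simp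
    then have IH: "\<bar>f x' - f y\<bar> \<le> real_of_int (l1 x' y) * s" using Suc.hyps(1) x'in Suc.prems(2) by blast
    have "x' + axis \<mu> 1 = x" by (simp add: x'_def)
    then have "\<bar>f x - f x'\<bar> \<le> s" using st[OF x'in] Suc.prems(1) by metis
    then show ?thesis using IH tri[of x'] l by (simp add: algebra_simps abs_minus_commute)
  qed
qed

lemma fib_sum_W:
  fixes n :: "int^'d"
  assumes "fib N (blk N n) \<subseteq> W" "finite W"
  shows "sum g (fib N (blk N n)) = (\<Sum>m\<in>W. if blk N m = blk N n then g m else 0)"
proof -
  have "{m\<in>W. blk N m = blk N n} = fib N (blk N (n::int^'d))" using assms(1) by (auto simp: fib_def)
  then show ?thesis using sum.inter_filter[OF assms(2), of g "\<lambda>m. blk N m = blk N n"] by simp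
qed

lemma poinc_pt:
  fixes f :: "int^'d \<Rightarrow> real" assumes N: "N > 0"
  shows "(f n - Pav N f n)\<^sup>2 \<le> (real (CARD('d) * N))\<^sup>2 *
            (\<Sum>z\<in>fib N (blk N n). \<Sum>\<mu>\<in>UNIV. (f (z + axis \<mu> 1) - f z)\<^sup>2)"
proof -
  define G where "G z = (\<Sum>\<mu>\<in>UNIV. (f (z + axis \<mu> 1) - f z)\<^sup>2)" for z
  define B where "B = fib N (blk N n)"
  define s where "s = sqrt (\<Sum>z\<in>B. G z)"
  define R where "R = real (CARD('d) * N)"
  have fB: "finite B" unfolding B_def using N by (rule finite_fib)
  have Gnn: "0 \<le> G z" for z by (simp add: G_def sum_nonneg)
  have s0: "0 \<le> s" unfolding s_def using Gnn by (simp add: sum_nonneg)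
  have R0: "0 \<le> R" unfolding R_def by simp
  have st: "\<bar>f (z + axis \<mu> 1) - f z\<bar> \<le> s" if "z \<in> B" for z \<mu>
  proof -
    have "(f (z + axis \<mu> 1) - f z)\<^sup>2 \<le> G z" unfolding G_def by (rule member_le_sum) auto
    also have "G z \<le> (\<Sum>z\<in>B. G z)" by (rule member_le_sum) (use that Gnn fB in auto)
    finally have "sqrt ((f (z + axis \<mu> 1) - f z)\<^sup>2) \<le> s" unfolding s_def by (rule real_sqrt_le_mono)
    then show ?thesis by simp
  qed
  have lip: "\<bar>f n - f m\<bar> \<le> R * s" if m: "m \<in> B" for m
  proof -
    have nB: "n \<in> B" unfolding B_def by simp
    have "\<bar>f n - f m\<bar> \<le> real_of_int (l1 n m) * s"
      using lip_fib[OF N, of "blk N n" f s n m] st nB m unfolding B_def by blast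
    also have "l1 n m \<le> int (CARD('d) * N)" using l1_fib[OF N, of m n] m l1_sym[of n m] unfolding B_def by simp
    then have "real_of_int (l1 n m) \<le> R" unfolding R_def by (metis of_int_le_iff of_int_of_nat_eq)
    then have "real_of_int (l1 n m) * s \<le> R * s" using s0 by (rule mult_right_mono)
    finally show ?thesis .
  qed
  define c where "c = 1 / real N ^ CARD('d)"
  have cB: "card B = N ^ CARD('d)" unfolding B_def by (rule card_fib[OF N])
  have c1: "c * real (card B) = 1" using N by (simp add: c_def cB)
  have c0: "0 \<le> c" by (simp add: c_def)
  have eq: "f n - Pav N f n = c * (\<Sum>m\<in>B. f n - f m)"
  proof -
    have e1: "c * (\<Sum>m\<in>B. f n - f m) = c * (real (card B) * f n) - c * (\<Sum>m\<in>B. f m)"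
      by (simp add: sum_subtractf algebra_simps)
    have e2: "c * (real (card B) * f n) = f n" by (metis c1 mult.assoc mult_1)
    have e3: "Pav N f n = c * (\<Sum>m\<in>B. f m)" by (simp only: Pav_def c_def B_def)
    show ?thesis using e1 e2 e3 by simp
  qed
  have "\<bar>f n - Pav N f n\<bar> \<le> c * (\<Sum>m\<in>B. \<bar>f n - f m\<bar>)"
    unfolding eq abs_mult using c0 by (simp add: sum_abs mult_left_mono)
  also have "\<dots> \<le> c * (\<Sum>m\<in>B. R * s)"
    using lip c0 by (intro mult_left_mono sum_mono) auto
  also have "\<dots> = R * s" using c1 by simp
  finally have "\<bar>f n - Pav N f n\<bar> \<le> \<bar>R * s\<bar>" using R0 s0 by simp
  then have "(f n - Pav N f n)\<^sup>2 \<le> (R * s)\<^sup>2" by (simp add: abs_le_square_iff)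
  also have "\<dots> = R\<^sup>2 * (\<Sum>z\<in>B. G z)" using Gnn by (simp add: s_def power_mult_distrib sum_nonneg)
  finally show ?thesis by (simp add: R_def B_def G_def)
qed

lemma fsup_G:
  fixes f :: "int^'d \<Rightarrow> real" assumes f: "fsup f"
  shows "fsup (\<lambda>z. \<Sum>\<mu>\<in>UNIV. (f (z + axis \<mu> 1) - f z)\<^sup>2)"
proof (rule fsup_local[OF f, where R=1])
  fix z assume "(\<Sum>\<mu>\<in>UNIV. (f (z + axis \<mu> 1) - f z)\<^sup>2) \<noteq> 0"
  then obtain \<mu> where "(f (z + axis \<mu> 1) - f z)\<^sup>2 \<noteq> 0" by (meson sum.not_neutral_contains_not_neutral)
  then have "f (z + axis \<mu> 1) \<noteq> 0 \<or> f z \<noteq> 0" by auto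
  then show "\<exists>m. l1 m z \<le> 1 \<and> f m \<noteq> 0" using l1_axis(1)[of z \<mu>] l1_self[of z] by force
qed

lemma poinc:
  fixes f :: "int^'d \<Rightarrow> real" assumes N: "N > 0" and f: "fsup f"
  shows "Sum_any (\<lambda>n. (f n - Pav N f n)\<^sup>2) \<le> (real (CARD('d) * N))\<^sup>2 * real N ^ CARD('d) *
           Sum_any (\<lambda>z. \<Sum>\<mu>\<in>UNIV. (f (z + axis \<mu> 1) - f z)\<^sup>2)"
proof -
  define G where "G z = (\<Sum>\<mu>\<in>UNIV. (f (z + axis \<mu> 1) - f z)\<^sup>2)" for z
  define W where "W = fibclos N {n. f n \<noteq> 0}"
  define R2 where "R2 = (real (CARD('d) * N))\<^sup>2"
  have fW: "finite W" unfolding W_def using N f by (rule finite_fibclos)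
  have subW: "n \<in> W \<Longrightarrow> fib N (blk N n) \<subseteq> W" for n unfolding W_def by (rule fib_sub_clos)
  have Gnn: "0 \<le> G z" for z by (simp add: G_def sum_nonneg)
  have fG: "fsup G" unfolding G_def using f by (rule fsup_G)
  have "Sum_any (\<lambda>n. (f n - Pav N f n)\<^sup>2) = (\<Sum>n\<in>W. (f n - Pav N f n)\<^sup>2)"
  proof (rule SA_sup[OF fW])
    fix n assume "(f n - Pav N f n)\<^sup>2 \<noteq> 0"
    then have "f n \<noteq> 0 \<or> Pav N f n \<noteq> 0" by auto
    then show "n \<in> W" unfolding W_def by (auto intro: in_fibclos Pav_supp_clos)
  qed
  also have "\<dots> \<le> (\<Sum>n\<in>W. R2 * (\<Sum>z\<in>fib N (blk N n). G z))"
    unfolding R2_def G_def by (intro sum_mono poinc_pt[OF N])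
  also have "\<dots> = (\<Sum>n\<in>W. \<Sum>z\<in>W. R2 * (if blk N z = blk N n then G z else 0))"
    by (intro sum.cong refl) (simp add: fib_sum_W[OF subW fW] sum_distrib_left)
  also have "\<dots> = (\<Sum>z\<in>W. \<Sum>n\<in>W. R2 * (if blk N z = blk N n then G z else 0))"
    by (rule sum.swap)
  also have "\<dots> = (\<Sum>z\<in>W. R2 * (real N ^ CARD('d) * G z))"
  proof (intro sum.cong refl)
    fix z assume z: "z \<in> W"
    have "(\<Sum>n\<in>W. if blk N z = blk N n then G z else 0) = (\<Sum>n\<in>W. if blk N n = blk N z then G z else 0)"
      by (rule sum.cong) auto
    also have "\<dots> = (\<Sum>n\<in>fib N (blk N z). G z)" by (rule fib_sum_W[OF subW[OF z] fW, symmetric])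
    also have "\<dots> = real N ^ CARD('d) * G z" using card_fib[OF N, of "blk N z"] by simp
    finally show "(\<Sum>n\<in>W. R2 * (if blk N z = blk N n then G z else 0)) = R2 * (real N ^ CARD('d) * G z)"
      by (simp add: sum_distrib_left[symmetric])
  qed
  also have "\<dots> = R2 * real N ^ CARD('d) * (\<Sum>z\<in>W. G z)"
    by (simp add: sum_distrib_left mult.assoc)
  also have "\<dots> \<le> R2 * real N ^ CARD('d) * Sum_any G"
    by (intro mult_left_mono SA_le_sum fW Gnn fG) (simp add: R2_def)
  finally show ?thesis by (simp add: R2_def G_def)
qed

lemma Op_quad:
  fixes f :: "int^'d \<Rightarrow> real" assumes N: "N > 0" and f: "fsup f"
  shows "Sum_any (\<lambda>n. f n * Op N M al f n) =
     real N ^ 2 * Sum_any (\<lambda>z. \<Sum>\<mu>\<in>UNIV. (f (z + axis \<mu> 1) - f z)\<^sup>2)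
     + M * Sum_any (\<lambda>n. (f n)\<^sup>2) + al * Sum_any (\<lambda>n. f n * Pav N f n)"
proof -
  have pw: "f n * Op N M al f n = (- (real N ^ 2) * (f n * Lap f n) + M * (f n)\<^sup>2) + al * (f n * Pav N f n)" for n
    by (simp add: Op_def power2_eq_square algebra_simps)
  have fs1: "fsup (\<lambda>n. f n * Lap f n)" "fsup (\<lambda>n. f n * Pav N f n)" "fsup (\<lambda>n. (f n)\<^sup>2)"
    using f by (auto intro: fsup_mult_l fsup_sq)
  have fs2: "fsup (\<lambda>n. - (real N ^ 2) * (f n * Lap f n))" "fsup (\<lambda>n. M * (f n)\<^sup>2)"
    "fsup (\<lambda>n. al * (f n * Pav N f n))" using fs1 by (auto intro: fsup_mult_r)
  have "Sum_any (\<lambda>n. f n * Op N M al f n) =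
      Sum_any (\<lambda>n. (- (real N ^ 2) * (f n * Lap f n) + M * (f n)\<^sup>2) + al * (f n * Pav N f n))"
    by (simp only: pw)
  also have "\<dots> = (Sum_any (\<lambda>n. - (real N ^ 2) * (f n * Lap f n)) + Sum_any (\<lambda>n. M * (f n)\<^sup>2))
      + Sum_any (\<lambda>n. al * (f n * Pav N f n))"
    by (simp only: SA_add[OF fsup_add[OF fs2(1) fs2(2)] fs2(3)] SA_add[OF fs2(1) fs2(2)])
  also have "\<dots> = (- (real N ^ 2) * Sum_any (\<lambda>n. f n * Lap f n) + M * Sum_any (\<lambda>n. (f n)\<^sup>2))
      + al * Sum_any (\<lambda>n. f n * Pav N f n)"
    by (simp only: SA_cmult[OF fs1(1)] SA_cmult[OF fs1(2)] SA_cmult[OF fs1(3)])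
  finally show ?thesis by (simp add: lap_form[OF f])
qed

lemma coercive:
  assumes N: "N > 0" and M: "M \<ge> 0" and al: "al > 0"
  shows "\<exists>\<gamma>>0. \<forall>f::int^'d \<Rightarrow> real. fsup f \<longrightarrow>
            \<gamma> * Sum_any (\<lambda>n. (f n)\<^sup>2) \<le> Sum_any (\<lambda>n. f n * Op N M al f n)"
proof -
  define C where "C = (real (CARD('d) * N))\<^sup>2 * real N ^ CARD('d)"
  define c where "c = max (C / real N ^ 2) (2 / al)"
  have c2: "2 / al \<le> c" unfolding c_def by simp
  have cpos: "c > 0" using al c2 by (smt (verit) divide_pos_pos)
  have cal: "2 \<le> c * al" using c2 al by (simp add: field_simps)
  have cN0: "C / real N ^ 2 \<le> c" unfolding c_def by simp
  have cN: "C \<le> c * real N ^ 2" using cN0 N by (simp add: pos_divide_le_eq)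
  show ?thesis
  proof (intro exI[of _ "1 / c"] conjI allI impI)
    show "1 / c > 0" using cpos by simp
    fix f :: "int^'d \<Rightarrow> real" assume f: "fsup f"
    define E where "E = Sum_any (\<lambda>z. \<Sum>\<mu>\<in>UNIV. (f (z + axis \<mu> 1) - f z)\<^sup>2)"
    define P where "P = Sum_any (\<lambda>n. f n * Pav N f n)"
    define S2 where "S2 = Sum_any (\<lambda>n. (f n)\<^sup>2)"
    define Q where "Q = Sum_any (\<lambda>n. f n * Op N M al f n)"
    have E0: "0 \<le> E" unfolding E_def by (intro SA_nonneg sum_nonneg) auto
    have P0: "0 \<le> P" unfolding P_def Pav_form[OF N f] by (intro SA_nonneg) auto
    have S0: "0 \<le> S2" unfolding S2_def by (intro SA_nonneg) auto
    have Qe: "Q = real N ^ 2 * E + M * S2 + al * P" unfolding Q_def E_def S2_def P_def by (rule Op_quad[OF N f])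
    have po: "Sum_any (\<lambda>n. (f n - Pav N f n)\<^sup>2) \<le> C * E" unfolding C_def E_def by (rule poinc[OF N f])
    have fsP: "fsup (Pav N f)" using N f by (rule fsup_Pav)
    have "S2 \<le> Sum_any (\<lambda>n. (f n - Pav N f n)\<^sup>2 + 2 * (f n * Pav N f n))"
      unfolding S2_def
    proof (rule SA_mono)
      show "fsup (\<lambda>n. (f n)\<^sup>2)" using f by (rule fsup_sq)
      show "fsup (\<lambda>n. (f n - Pav N f n)\<^sup>2 + 2 * (f n * Pav N f n))"
        using f fsP by (intro fsup_add fsup_sq fsup_diff fsup_mult_r fsup_mult_l)
      show "(f n)\<^sup>2 \<le> (f n - Pav N f n)\<^sup>2 + 2 * (f n * Pav N f n)" for n
        by (simp add: power2_eq_square algebra_simps)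
    qed
    also have "\<dots> = Sum_any (\<lambda>n. (f n - Pav N f n)\<^sup>2) + 2 * P"
    proof -
      have a: "fsup (\<lambda>n. (f n - Pav N f n)\<^sup>2)" using f fsP by (intro fsup_sq fsup_diff)
      have b: "fsup (\<lambda>n. f n * Pav N f n)" using f by (rule fsup_mult_l)
      have b2: "fsup (\<lambda>n. 2 * (f n * Pav N f n))" using b by (rule fsup_mult_r)
      show ?thesis unfolding P_def by (simp only: SA_add[OF a b2] SA_cmult[OF b])
    qed
    also have "\<dots> \<le> C * E + 2 * P" using po by simp
    also have "\<dots> \<le> c * real N ^ 2 * E + c * al * P"
      using cN cal E0 P0 by (intro add_mono mult_right_mono) auto
    also have "\<dots> \<le> c * Q" unfolding Qe using cpos M S0 by (simp add: algebra_simps)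
    finally have "S2 \<le> c * Q" .
    then show "1 / c * S2 \<le> Q" using cpos by (simp add: field_simps)
  qed
qed

lemma sq4: "((a::real) + b + c + e)\<^sup>2 \<le> 4 * (a\<^sup>2 + b\<^sup>2 + c\<^sup>2 + e\<^sup>2)"
proof -
  have h: "4 * (a\<^sup>2 + b\<^sup>2 + c\<^sup>2 + e\<^sup>2) - (a + b + c + e)\<^sup>2 =
     (a-b)\<^sup>2 + (a-c)\<^sup>2 + (a-e)\<^sup>2 + (b-c)\<^sup>2 + (b-e)\<^sup>2 + (c-e)\<^sup>2"
    by (simp add: power2_eq_square algebra_simps)
  have "0 \<le> (a-b)\<^sup>2 + (a-c)\<^sup>2 + (a-e)\<^sup>2 + (b-c)\<^sup>2 + (b-e)\<^sup>2 + (c-e)\<^sup>2" by simp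
  then show ?thesis using h by linarith
qed

lemma Pav_sq_le:
  fixes f :: "int^'d \<Rightarrow> real" assumes N: "N > 0" and f: "fsup f"
  shows "Sum_any (\<lambda>n. (Pav N f n)\<^sup>2) \<le> Sum_any (\<lambda>n. (f n)\<^sup>2)"
proof -
  have fsP: "fsup (Pav N f)" using N f by (rule fsup_Pav)
  have a: "fsup (\<lambda>n. (f n)\<^sup>2)" "fsup (\<lambda>n. (Pav N f n)\<^sup>2)" using f fsP by (auto intro: fsup_sq)
  have "Sum_any (\<lambda>n. (Pav N f n)\<^sup>2) = Sum_any (\<lambda>n. f n * Pav N f n)" by (rule Pav_form[OF N f, symmetric])
  also have "\<dots> \<le> Sum_any (\<lambda>n. (1/2) * ((f n)\<^sup>2 + (Pav N f n)\<^sup>2))"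
  proof (rule SA_mono)
    show "fsup (\<lambda>n. f n * Pav N f n)" using f by (rule fsup_mult_l)
    show "fsup (\<lambda>n. (1/2) * ((f n)\<^sup>2 + (Pav N f n)\<^sup>2))" using a by (intro fsup_mult_r fsup_add)
    show "f n * Pav N f n \<le> (1/2) * ((f n)\<^sup>2 + (Pav N f n)\<^sup>2)" for n
    proof -
      have "0 \<le> (f n - Pav N f n)\<^sup>2" by simp
      then show ?thesis by (simp add: power2_eq_square algebra_simps)
    qed
  qed
  also have "\<dots> = (1/2) * (Sum_any (\<lambda>n. (f n)\<^sup>2) + Sum_any (\<lambda>n. (Pav N f n)\<^sup>2))"
    by (simp only: SA_cmult[OF fsup_add[OF a]] SA_add[OF a])
  finally show ?thesis by simp
qed

lemma SA_shift_sq: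
  fixes f :: "int^'d \<Rightarrow> real"
  shows "Sum_any (\<lambda>n. (f (n + c))\<^sup>2) = Sum_any (\<lambda>n. (f n)\<^sup>2)"
    "Sum_any (\<lambda>n. (f (n - c))\<^sup>2) = Sum_any (\<lambda>n. (f n)\<^sup>2)"
  using SA_shift[of "\<lambda>n. (f n)\<^sup>2" c] SA_shift[of "\<lambda>n. (f n)\<^sup>2" "-c"] by simp_all

lemma bounded:
  assumes N: "N > 0"
  shows "\<exists>K>0. \<forall>f::int^'d \<Rightarrow> real. fsup f \<longrightarrow>
            Sum_any (\<lambda>n. (Op N M al f n)\<^sup>2) \<le> K * Sum_any (\<lambda>n. (f n)\<^sup>2)"
proof -
  define d where "d = real CARD('d)"
  define A1 where "A1 = real N ^ 4 * d"
  define A3 where "A3 = (2 * d * real N ^ 2 + M)\<^sup>2"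
  define A4 where "A4 = al\<^sup>2"
  define K where "K = 4 * (A1 * d + A1 * d + A3 + A4) + 1"
  have d0: "0 \<le> d" by (simp add: d_def)
  have A10: "0 \<le> A1" by (simp add: A1_def d0)
  have "0 \<le> A1 * d" using A10 d0 by simp
  moreover have "0 \<le> A3" "0 \<le> A4" by (simp_all add: A3_def A4_def)
  ultimately have "0 \<le> 4 * (A1 * d + A1 * d + A3 + A4)" by simp
  then have K0: "K > 0" unfolding K_def by simp
  show ?thesis
  proof (intro exI[of _ K] conjI allI impI)
    show "K > 0" by (rule K0)
    fix f :: "int^'d \<Rightarrow> real" assume f: "fsup f"
    define T1 where "T1 n = (\<Sum>\<mu>\<in>UNIV. (f (n + axis \<mu> 1))\<^sup>2)" for n
    define T2 where "T2 n = (\<Sum>\<mu>\<in>UNIV. (f (n - axis \<mu> 1))\<^sup>2)" for n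
    define S2 where "S2 = Sum_any (\<lambda>n. (f n)\<^sup>2)"
    have S0: "0 \<le> S2" unfolding S2_def by (intro SA_nonneg) auto
    have fsP: "fsup (Pav N f)" using N f by (rule fsup_Pav)
    have fs1: "fsup (\<lambda>n. (f (n + axis \<mu> 1))\<^sup>2)" "fsup (\<lambda>n. (f (n - axis \<mu> 1))\<^sup>2)" for \<mu>
      using f by (auto intro: fsup_sq fsup_shift fsup_shift')
    have fT: "fsup T1" "fsup T2" "fsup (\<lambda>n. (f n)\<^sup>2)" "fsup (\<lambda>n. (Pav N f n)\<^sup>2)"
    proof -
      show "fsup T1"
      proof (rule finite_subset)
        show "{n. T1 n \<noteq> 0} \<subseteq> (\<Union>\<mu>. {n. (f (n + axis \<mu> 1))\<^sup>2 \<noteq> 0})"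
        proof
          fix n assume "n \<in> {n. T1 n \<noteq> 0}"
          then obtain \<mu> where "(f (n + axis \<mu> 1))\<^sup>2 \<noteq> 0" unfolding T1_def
            by (auto elim: sum.not_neutral_contains_not_neutral)
          then show "n \<in> (\<Union>\<mu>. {n. (f (n + axis \<mu> 1))\<^sup>2 \<noteq> 0})" by auto
        qed
        show "finite (\<Union>\<mu>. {n. (f (n + axis \<mu> 1))\<^sup>2 \<noteq> 0})"
          using fs1 by (intro finite_UN_I) auto
      qed
      show "fsup T2"
      proof (rule finite_subset)
        show "{n. T2 n \<noteq> 0} \<subseteq> (\<Union>\<mu>. {n. (f (n - axis \<mu> 1))\<^sup>2 \<noteq> 0})"
        proof
          fix n assume "n \<in> {n. T2 n \<noteq> 0}"
          then obtain \<mu> where "(f (n - axis \<mu> 1))\<^sup>2 \<noteq> 0" unfolding T2_def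
            by (auto elim: sum.not_neutral_contains_not_neutral)
          then show "n \<in> (\<Union>\<mu>. {n. (f (n - axis \<mu> 1))\<^sup>2 \<noteq> 0})" by auto
        qed
        show "finite (\<Union>\<mu>. {n. (f (n - axis \<mu> 1))\<^sup>2 \<noteq> 0})"
          using fs1 by (intro finite_UN_I) auto
      qed
      show "fsup (\<lambda>n. (f n)\<^sup>2)" "fsup (\<lambda>n. (Pav N f n)\<^sup>2)" using f fsP by (auto intro: fsup_sq)
    qed
    have ST1: "Sum_any T1 = d * S2"
    proof -
      have "Sum_any T1 = (\<Sum>\<mu>\<in>UNIV. Sum_any (\<lambda>n. (f (n + axis \<mu> 1))\<^sup>2))"
        unfolding T1_def using fs1 by (intro SA_sum) auto
      then show ?thesis by (simp add: SA_shift_sq S2_def d_def)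
    qed
    have ST2: "Sum_any T2 = d * S2"
    proof -
      have "Sum_any T2 = (\<Sum>\<mu>\<in>UNIV. Sum_any (\<lambda>n. (f (n - axis \<mu> 1))\<^sup>2))"
        unfolding T2_def using fs1 by (intro SA_sum) auto
      then show ?thesis by (simp add: SA_shift_sq S2_def d_def)
    qed
    have ST4: "Sum_any (\<lambda>n. (Pav N f n)\<^sup>2) \<le> S2" unfolding S2_def by (rule Pav_sq_le[OF N f])
    have pw: "(Op N M al f n)\<^sup>2 \<le> 4 * (A1 * T1 n + A1 * T2 n + A3 * (f n)\<^sup>2 + A4 * (Pav N f n)\<^sup>2)" for n
    proof -
      define Sp where "Sp = (\<Sum>\<mu>\<in>UNIV. f (n + axis \<mu> 1))"
      define Sm where "Sm = (\<Sum>\<mu>\<in>UNIV. f (n - axis \<mu> 1))"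
      have L: "Lap f n = Sp + Sm - 2 * d * f n"
        by (simp add: Lap_def Sp_def Sm_def d_def sum.distrib sum_subtractf)
      then have op: "Op N M al f n = (- (real N ^ 2) * Sp) + (- (real N ^ 2) * Sm) + ((2 * d * real N ^ 2 + M) * f n) + (al * Pav N f n)"
        unfolding Op_def L by (simp add: algebra_simps)
      have sp: "Sp\<^sup>2 \<le> T1 n * d" unfolding Sp_def T1_def d_def by (rule sum_squared_le_sum_of_squares)
      have sm: "Sm\<^sup>2 \<le> T2 n * d" unfolding Sm_def T2_def d_def by (rule sum_squared_le_sum_of_squares)
      have "(Op N M al f n)\<^sup>2 \<le> 4 * ((- (real N ^ 2) * Sp)\<^sup>2 + (- (real N ^ 2) * Sm)\<^sup>2 + ((2 * d * real N ^ 2 + M) * f n)\<^sup>2 + (al * Pav N f n)\<^sup>2)"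
        unfolding op by (rule sq4)
      also have "\<dots> = 4 * (real N ^ 4 * Sp\<^sup>2 + real N ^ 4 * Sm\<^sup>2 + A3 * (f n)\<^sup>2 + A4 * (Pav N f n)\<^sup>2)"
        by (simp add: A3_def A4_def power2_eq_square power4_eq_xxxx algebra_simps)
      also have "\<dots> \<le> 4 * (real N ^ 4 * (T1 n * d) + real N ^ 4 * (T2 n * d) + A3 * (f n)\<^sup>2 + A4 * (Pav N f n)\<^sup>2)"
        using sp sm by (intro mult_left_mono add_mono order_refl) auto
      finally show ?thesis by (simp add: A1_def algebra_simps)
    qed
    have "Sum_any (\<lambda>n. (Op N M al f n)\<^sup>2) \<le> Sum_any (\<lambda>n. 4 * (A1 * T1 n + A1 * T2 n + A3 * (f n)\<^sup>2 + A4 * (Pav N f n)\<^sup>2))"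
    proof (rule SA_mono[OF _ _ pw])
      show "fsup (\<lambda>n. (Op N M al f n)\<^sup>2)" using N f by (intro fsup_sq fsup_Op)
      show "fsup (\<lambda>n. 4 * (A1 * T1 n + A1 * T2 n + A3 * (f n)\<^sup>2 + A4 * (Pav N f n)\<^sup>2))"
        using fT by (intro fsup_mult_r fsup_add) auto
    qed
    also have "\<dots> = 4 * (A1 * Sum_any T1 + A1 * Sum_any T2 + A3 * S2 + A4 * Sum_any (\<lambda>n. (Pav N f n)\<^sup>2))"
    proof -
      have m: "fsup (\<lambda>n. A1 * T1 n)" "fsup (\<lambda>n. A1 * T2 n)" "fsup (\<lambda>n. A3 * (f n)\<^sup>2)" "fsup (\<lambda>n. A4 * (Pav N f n)\<^sup>2)"
        using fT by (auto intro: fsup_mult_r)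
      show ?thesis unfolding S2_def
        by (simp only: SA_cmult[OF fsup_add[OF fsup_add[OF fsup_add[OF m(1) m(2)] m(3)] m(4)]]
            SA_add[OF fsup_add[OF fsup_add[OF m(1) m(2)] m(3)] m(4)] SA_add[OF fsup_add[OF m(1) m(2)] m(3)]
            SA_add[OF m(1) m(2)] SA_cmult[OF fT(1)] SA_cmult[OF fT(2)] SA_cmult[OF fT(3)] SA_cmult[OF fT(4)])
    qed
    also have "\<dots> \<le> 4 * (A1 * (d * S2) + A1 * (d * S2) + A3 * S2 + A4 * S2)"
      unfolding ST1 ST2 using ST4 by (intro mult_left_mono add_mono order_refl) (auto simp: A4_def)
    also have "\<dots> \<le> K * S2" unfolding K_def using S0 by (simp add: algebra_simps)
    finally show "Sum_any (\<lambda>n. (Op N M al f n)\<^sup>2) \<le> K * Sum_any (\<lambda>n. (f n)\<^sup>2)" by (simp add: S2_def)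
  qed
qed

definition Tst :: "nat \<Rightarrow> real \<Rightarrow> real \<Rightarrow> real \<Rightarrow> (int^'d \<Rightarrow> real) \<Rightarrow> int^'d \<Rightarrow> real" where
  "Tst N M al eps f n = f n - eps * Op N M al f n"

lemma contraction:
  assumes N: "N > 0" and M: "M \<ge> 0" and al: "al > 0"
  shows "\<exists>eps>0. \<exists>q2\<ge>0. q2 < 1 \<and> (\<forall>f::int^'d \<Rightarrow> real. fsup f \<longrightarrow>
            Sum_any (\<lambda>n. (Tst N M al eps f n)\<^sup>2) \<le> q2 * Sum_any (\<lambda>n. (f n)\<^sup>2))"
proof -
  obtain \<gamma> where g0: "\<gamma> > 0" and gam: "\<And>f::int^'d \<Rightarrow> real. fsup f \<Longrightarrow>
      \<gamma> * Sum_any (\<lambda>n. (f n)\<^sup>2) \<le> Sum_any (\<lambda>n. f n * Op N M al f n)"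
    using coercive[OF N M al] by blast
  obtain K where K0: "K > 0" and Kb: "\<And>f::int^'d \<Rightarrow> real. fsup f \<Longrightarrow>
      Sum_any (\<lambda>n. (Op N M al f n)\<^sup>2) \<le> K * Sum_any (\<lambda>n. (f n)\<^sup>2)"
    using bounded[OF N, of M al] by blast
  define K' where "K' = max K (\<gamma>\<^sup>2)"
  have K'0: "K' > 0" using K0 by (simp add: K'_def)
  have KK: "K \<le> K'" "\<gamma>\<^sup>2 \<le> K'" by (simp_all add: K'_def)
  define eps where "eps = \<gamma> / K'"
  define q2 where "q2 = 1 - \<gamma>\<^sup>2 / K'"
  have e0: "eps > 0" using g0 K'0 by (simp add: eps_def)
  have q0: "q2 \<ge> 0" using KK K'0 by (simp add: q2_def field_simps)
  have q1: "q2 < 1" using g0 K'0 by (simp add: q2_def)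
  have main: "Sum_any (\<lambda>n. (Tst N M al eps f n)\<^sup>2) \<le> q2 * Sum_any (\<lambda>n. (f n)\<^sup>2)"
    if f: "fsup f" for f :: "int^'d \<Rightarrow> real"
  proof -
    define S2 where "S2 = Sum_any (\<lambda>n. (f n)\<^sup>2)"
    define Q where "Q = Sum_any (\<lambda>n. f n * Op N M al f n)"
    define SO where "SO = Sum_any (\<lambda>n. (Op N M al f n)\<^sup>2)"
    have S0: "0 \<le> S2" unfolding S2_def by (intro SA_nonneg) auto
    have fO: "fsup (Op N M al f)" using N f by (rule fsup_Op)
    have a: "fsup (\<lambda>n. (f n)\<^sup>2)" "fsup (\<lambda>n. f n * Op N M al f n)" "fsup (\<lambda>n. (Op N M al f n)\<^sup>2)"
      using f fO by (auto intro: fsup_sq fsup_mult_l)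
    have b: "fsup (\<lambda>n. 2 * eps * (f n * Op N M al f n))" "fsup (\<lambda>n. eps\<^sup>2 * (Op N M al f n)\<^sup>2)"
      using a by (auto intro: fsup_mult_r)
    have pw: "(Tst N M al eps f n)\<^sup>2 = ((f n)\<^sup>2 - 2 * eps * (f n * Op N M al f n)) + eps\<^sup>2 * (Op N M al f n)\<^sup>2" for n
      by (simp add: Tst_def power2_eq_square algebra_simps)
    have "Sum_any (\<lambda>n. (Tst N M al eps f n)\<^sup>2) =
        Sum_any (\<lambda>n. ((f n)\<^sup>2 - 2 * eps * (f n * Op N M al f n)) + eps\<^sup>2 * (Op N M al f n)\<^sup>2)"
      by (simp only: pw)
    also have "\<dots> = (S2 - 2 * eps * Q) + eps\<^sup>2 * SO"
      unfolding S2_def Q_def SO_def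
      by (simp only: SA_add[OF fsup_diff[OF a(1) b(1)] b(2)] SA_diff[OF a(1) b(1)] SA_cmult[OF a(2)] SA_cmult[OF a(3)])
    also have "\<dots> \<le> (S2 - 2 * eps * (\<gamma> * S2)) + eps\<^sup>2 * (K' * S2)"
    proof -
      have "\<gamma> * S2 \<le> Q" unfolding S2_def Q_def by (rule gam[OF f])
      moreover have "SO \<le> K * S2" unfolding S2_def SO_def by (rule Kb[OF f])
      moreover have "K * S2 \<le> K' * S2" using KK S0 by (intro mult_right_mono) auto
      ultimately show ?thesis using e0 by (intro add_mono diff_mono order_refl mult_left_mono) auto
    qed
    also have "\<dots> = q2 * S2" using K'0 by (simp add: q2_def eps_def power2_eq_square field_simps)
    finally show ?thesis by (simp add: S2_def)
  qed
  show ?thesis using e0 q0 q1 main by blast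
qed

lemma Lap_sym:
  fixes phi u :: "int^'d \<Rightarrow> real"
  assumes fp: "fsup phi" and fL: "fsup (\<lambda>n. Lap phi n * u n)"
  shows "Sum_any (\<lambda>n. phi n * Lap u n) = Sum_any (\<lambda>n. Lap phi n * u n)"
proof -
  define e where "e \<mu> = (axis \<mu> 1 :: int^'d)" for \<mu>
  define H where "H \<mu> n = phi (n - e \<mu>) * u n" for \<mu> n
  define K where "K \<mu> n = phi n * u (n - e \<mu>)" for \<mu> n
  define D where "D \<mu> n = (H \<mu> (n + e \<mu>) - H \<mu> n) - (K \<mu> (n + e \<mu>) - K \<mu> n)" for \<mu> n
  have fH: "fsup (H \<mu>)" "fsup (K \<mu>)" for \<mu> unfolding H_def K_def using fp by (auto intro: fsup_mult_l fsup_shift')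
  have fD: "fsup (D \<mu>)" for \<mu> unfolding D_def using fH by (intro fsup_diff fsup_shift) auto
  have D0: "Sum_any (D \<mu>) = 0" for \<mu>
    unfolding D_def
    by (simp only: SA_diff[OF fsup_diff[OF fsup_shift[OF fH(1)] fH(1)] fsup_diff[OF fsup_shift[OF fH(2)] fH(2)]]
       SA_telescope[OF fH(1)] SA_telescope[OF fH(2)])
  have pw: "phi n * Lap u n - Lap phi n * u n = (\<Sum>\<mu>\<in>UNIV. D \<mu> n)" for n
    by (simp add: Lap_def D_def H_def K_def e_def sum_distrib_left sum_distrib_right sum_subtractf[symmetric] algebra_simps)
  have fl: "fsup (\<lambda>n. phi n * Lap u n)" using fp by (rule fsup_mult_l)
  have "Sum_any (\<lambda>n. phi n * Lap u n) - Sum_any (\<lambda>n. Lap phi n * u n) = Sum_any (\<lambda>n. phi n * Lap u n - Lap phi n * u n)"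
    by (rule SA_diff[OF fl fL, symmetric])
  also have "\<dots> = Sum_any (\<lambda>n. \<Sum>\<mu>\<in>UNIV. D \<mu> n)" by (simp only: pw)
  also have "\<dots> = 0" using fD by (simp add: SA_sum D0)
  finally show ?thesis by simp
qed

lemma Op_sym:
  fixes phi u :: "int^'d \<Rightarrow> real"
  assumes N: "N > 0" and fp: "fsup phi"
  shows "Sum_any (\<lambda>n. phi n * Op N M al u n) = Sum_any (\<lambda>n. Op N M al phi n * u n)"
proof -
  have fLp: "fsup (Lap phi)"
  proof (rule fsup_local[OF fp, where R=1])
    fix n assume "Lap phi n \<noteq> 0"
    then obtain \<mu> where "phi (n + axis \<mu> 1) - 2 * phi n + phi (n - axis \<mu> 1) \<noteq> 0"
      unfolding Lap_def by (meson sum.not_neutral_contains_not_neutral)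
    then have "phi (n + axis \<mu> 1) \<noteq> 0 \<or> phi n \<noteq> 0 \<or> phi (n - axis \<mu> 1) \<noteq> 0" by auto
    then show "\<exists>m. l1 m n \<le> 1 \<and> phi m \<noteq> 0" using l1_axis[of n \<mu>] l1_self[of n] by force
  qed
  have fPp: "fsup (Pav N phi)" using N fp by (rule fsup_Pav)
  have a: "fsup (\<lambda>n. phi n * Lap u n)" "fsup (\<lambda>n. phi n * u n)" "fsup (\<lambda>n. phi n * Pav N u n)"
     "fsup (\<lambda>n. Lap phi n * u n)" "fsup (\<lambda>n. Pav N phi n * u n)"
    using fp fLp fPp by (auto intro: fsup_mult_l)
  have b: "fsup (\<lambda>n. - (real N ^ 2) * (phi n * Lap u n))" "fsup (\<lambda>n. M * (phi n * u n))"
    "fsup (\<lambda>n. al * (phi n * Pav N u n))" "fsup (\<lambda>n. - (real N ^ 2) * (Lap phi n * u n))"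
    "fsup (\<lambda>n. al * (Pav N phi n * u n))"
    using a by (auto intro: fsup_mult_r)
  have p1: "phi n * Op N M al u n = (- (real N ^ 2) * (phi n * Lap u n) + M * (phi n * u n)) + al * (phi n * Pav N u n)" for n
    by (simp add: Op_def algebra_simps)
  have p2: "Op N M al phi n * u n = (- (real N ^ 2) * (Lap phi n * u n) + M * (phi n * u n)) + al * (Pav N phi n * u n)" for n
    by (simp add: Op_def algebra_simps)
  have "Sum_any (\<lambda>n. phi n * Op N M al u n) =
      (- (real N ^ 2) * Sum_any (\<lambda>n. phi n * Lap u n) + M * Sum_any (\<lambda>n. phi n * u n)) + al * Sum_any (\<lambda>n. phi n * Pav N u n)"
    by (simp only: p1 SA_add[OF fsup_add[OF b(1) b(2)] b(3)] SA_add[OF b(1) b(2)] SA_cmult[OF a(1)] SA_cmult[OF a(2)] SA_cmult[OF a(3)])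
  also have "\<dots> = (- (real N ^ 2) * Sum_any (\<lambda>n. Lap phi n * u n) + M * Sum_any (\<lambda>n. phi n * u n)) + al * Sum_any (\<lambda>n. Pav N phi n * u n)"
    using Lap_sym[OF fp a(4)] Pav_sym[OF N fp, of u] by simp
  also have "\<dots> = Sum_any (\<lambda>n. Op N M al phi n * u n)"
    by (simp only: p2 SA_add[OF fsup_add[OF b(4) b(2)] b(5)] SA_add[OF b(4) b(2)] SA_cmult[OF a(4)] SA_cmult[OF a(2)] SA_cmult[OF a(5)])
  finally show ?thesis .
qed

definition ind :: "int^'d \<Rightarrow> int^'d \<Rightarrow> real" where "ind m n = (if n = m then 1 else 0)"

definition vit :: "nat \<Rightarrow> real \<Rightarrow> real \<Rightarrow> real \<Rightarrow> int^'d \<Rightarrow> nat \<Rightarrow> int^'d \<Rightarrow> real" where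
  "vit N M al eps m j = (Tst N M al eps ^^ j) (ind m)"

lemma vit_0: "vit N M al eps m 0 = ind m" by (simp add: vit_def)
lemma vit_Suc: "vit N M al eps m (Suc j) = Tst N M al eps (vit N M al eps m j)" by (simp add: vit_def)

definition rho :: "real \<Rightarrow> real" where "rho q2 = max (sqrt q2) (1/2)"

lemma fsup_ind: "fsup (ind m)"
  by (rule finite_subset[of _ "{m}"]) (auto simp: ind_def)

lemma SA_ind_sq: "Sum_any (\<lambda>n. (ind m n)\<^sup>2) = 1"
proof -
  have "Sum_any (\<lambda>n. (ind m n)\<^sup>2) = (\<Sum>n\<in>{m}. (ind m n)\<^sup>2)" by (rule SA_sup) (auto simp: ind_def split: if_splits)
  then show ?thesis by (simp add: ind_def)
qed

lemma SA_ind_mult: "Sum_any (\<lambda>n. ind m n * w n) = w m"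
proof -
  have "Sum_any (\<lambda>n. ind m n * w n) = (\<Sum>n\<in>{m}. ind m n * w n)" by (rule SA_sup) (auto simp: ind_def split: if_splits)
  then show ?thesis by (simp add: ind_def)
qed

lemma L2_set_sum_le: fixes J :: nat shows "L2_set (\<lambda>n. \<Sum>j<J. F j n) A \<le> (\<Sum>j<J. L2_set (F j) A)"
proof (induction J)
  case 0 then show ?case by (simp add: L2_set_def)
next
  case (Suc J)
  have "L2_set (\<lambda>n. \<Sum>j<Suc J. F j n) A = L2_set (\<lambda>n. (\<Sum>j<J. F j n) + F J n) A" by simp
  also have "\<dots> \<le> L2_set (\<lambda>n. \<Sum>j<J. F j n) A + L2_set (F J) A" by (rule L2_set_triangle_ineq)
  also have "\<dots> \<le> (\<Sum>j<J. L2_set (F j) A) + L2_set (F J) A" using Suc by simp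
  finally show ?case by simp
qed

context
  fixes N :: nat and M al eps q2 :: real
  assumes N: "N > 0" and eps: "eps > 0" and q2: "0 \<le> q2" "q2 < 1"
    and contr: "\<And>f::int^'d \<Rightarrow> real. fsup f \<Longrightarrow> Sum_any (\<lambda>n. (Tst N M al eps f n)\<^sup>2) \<le> q2 * Sum_any (\<lambda>n. (f n)\<^sup>2)"
begin

lemma rho_props: "0 < rho q2" "rho q2 < 1" "q2 \<le> (rho q2)\<^sup>2" "sqrt q2 \<le> rho q2"
proof -
  have s1: "sqrt q2 < 1" using q2 by simp
  show "0 < rho q2" "rho q2 < 1" "sqrt q2 \<le> rho q2" unfolding rho_def using s1 by auto
  have "sqrt q2 \<le> rho q2" unfolding rho_def by simp
  then have "(sqrt q2)\<^sup>2 \<le> (rho q2)\<^sup>2" using q2 by (intro power_mono) auto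
  then show "q2 \<le> (rho q2)\<^sup>2" using q2 by simp
qed

lemma v_supp: "vit N M al eps m j n \<noteq> 0 \<Longrightarrow> l1 n (m::int^'d) \<le> int j * int (CARD('d) * N)"
proof (induction j arbitrary: n)
  case 0 then show ?case by (simp add: vit_0 ind_def split: if_splits)
next
  case (Suc j)
  have R0: "0 \<le> int (CARD('d) * N)" by simp
  from Suc.prems have "vit N M al eps m j n \<noteq> 0 \<or> Op N M al (vit N M al eps m j) n \<noteq> 0"
    by (auto simp: vit_Suc Tst_def)
  then show ?case
  proof
    assume "vit N M al eps m j n \<noteq> 0"
    then have a: "l1 n m \<le> int j * int (CARD('d) * N)" by (rule Suc.IH)
    have "int j * int (CARD('d) * N) \<le> int (Suc j) * int (CARD('d) * N)" by (rule mult_right_mono) simp_all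
    then show ?thesis using a by linarith
  next
    assume "Op N M al (vit N M al eps m j) n \<noteq> 0"
    then obtain m' where m': "l1 m' n \<le> int (CARD('d) * N)" "vit N M al eps m j m' \<noteq> 0"
      using Op_supp[OF N] by blast
    have "l1 m' m \<le> int j * int (CARD('d) * N)" using m'(2) by (rule Suc.IH)
    moreover have "l1 n m \<le> l1 n m' + l1 m' m" by (rule l1_tri)
    moreover have "int (Suc j) * int (CARD('d) * N) = int (CARD('d) * N) + int j * int (CARD('d) * N)"
      by (simp add: algebra_simps)
    ultimately show ?thesis using m'(1) l1_sym[of n m'] by linarith
  qed
qed

lemma v_fsup: "fsup (vit N M al eps (m::int^'d) j)"
proof (rule finite_subset[OF _ finite_ball[of m "int j * int (CARD('d) * N)"]])
  show "{n. vit N M al eps m j n \<noteq> 0} \<subseteq> {n. l1 n m \<le> int j * int (CARD('d) * N)}"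
    using v_supp by blast
qed

lemma v_S2: "Sum_any (\<lambda>n. (vit N M al eps (m::int^'d) j n)\<^sup>2) \<le> q2 ^ j"
proof (induction j)
  case 0 then show ?case by (simp add: vit_0 SA_ind_sq)
next
  case (Suc j)
  have "Sum_any (\<lambda>n. (vit N M al eps m (Suc j) n)\<^sup>2) \<le> q2 * Sum_any (\<lambda>n. (vit N M al eps m j n)\<^sup>2)"
    unfolding vit_Suc by (rule contr[OF v_fsup])
  also have "\<dots> \<le> q2 * q2 ^ j" using Suc q2 by (intro mult_left_mono) auto
  finally show ?case by simp
qed

lemma v_pt_sq: "(vit N M al eps (m::int^'d) j n)\<^sup>2 \<le> q2 ^ j"
proof -
  have "(\<Sum>x\<in>{n}. (vit N M al eps m j x)\<^sup>2) \<le> Sum_any (\<lambda>x. (vit N M al eps m j x)\<^sup>2)"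
    by (rule SA_le_sum) (auto intro: fsup_sq v_fsup)
  then show ?thesis using v_S2[of m j] by simp
qed

lemma v_pt: "\<bar>vit N M al eps (m::int^'d) j n\<bar> \<le> rho q2 ^ j"
proof -
  have "(vit N M al eps m j n)\<^sup>2 \<le> ((rho q2)\<^sup>2) ^ j"
    using v_pt_sq[of m j n] power_mono[OF rho_props(3) q2(1), of j] by linarith
  also have "\<dots> = (rho q2 ^ j)\<^sup>2" by (simp add: power_mult[symmetric] mult.commute)
  finally have "\<bar>vit N M al eps m j n\<bar> \<le> \<bar>rho q2 ^ j\<bar>" by (simp only: abs_le_square_iff)
  then show ?thesis using rho_props(1) by simp
qed

lemma v_L2: "L2_set (vit N M al eps (m::int^'d) j) A \<le> rho q2 ^ j"
proof (cases "finite A")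
  case True
  have "(\<Sum>x\<in>A. (vit N M al eps m j x)\<^sup>2) \<le> Sum_any (\<lambda>x. (vit N M al eps m j x)\<^sup>2)"
    using True by (intro SA_le_sum) (auto intro: fsup_sq v_fsup)
  also have "\<dots> \<le> q2 ^ j" by (rule v_S2)
  finally have "L2_set (vit N M al eps m j) A \<le> sqrt (q2 ^ j)" unfolding L2_set_def by simp
  also have "\<dots> = sqrt q2 ^ j" by (simp add: real_sqrt_power)
  also have "\<dots> \<le> rho q2 ^ j" using rho_props(4) q2 by (intro power_mono) auto
  finally show ?thesis .
next
  case False then show ?thesis using rho_props(1) by simp
qed

lemma v_step: "eps * Op N M al (vit N M al eps m j) n = vit N M al eps m j n - vit N M al eps m (Suc j) n"
  by (simp add: vit_Suc Tst_def)

lemma Op_partial: "Op N M al (\<lambda>n. eps * (\<Sum>j<J. vit N M al eps (m::int^'d) j n)) x = ind m x - vit N M al eps m J x"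
proof -
  have "Op N M al (\<lambda>n. eps * (\<Sum>j<J. vit N M al eps m j n)) x = eps * Op N M al (\<lambda>n. \<Sum>j<J. vit N M al eps m j n) x"
    by (rule Op_cmult)
  also have "\<dots> = eps * (\<Sum>j<J. Op N M al (vit N M al eps m j) x)"
    by (simp only: Op_sum[OF finite_lessThan])
  also have "\<dots> = (\<Sum>j<J. vit N M al eps m j x - vit N M al eps m (Suc j) x)"
    by (simp add: sum_distrib_left v_step)
  also have "\<dots> = ind m x - vit N M al eps m J x"
    using sum_lessThan_telescope'[of "\<lambda>j. vit N M al eps m j x" J] by (simp add: vit_0)
  finally show ?thesis .
qed

lemma fsup_partial: "fsup (\<lambda>n. eps * (\<Sum>j<J. vit N M al eps (m::int^'d) j n))"
proof (rule fsup_mult_r)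
  show "fsup (\<lambda>n. \<Sum>j<J. vit N M al eps m j n)"
    by (rule finite_subset[of _ "\<Union>j<J. {n. vit N M al eps m j n \<noteq> 0}"])
      (auto elim: sum.not_neutral_contains_not_neutral intro: v_fsup)
qed

lemma v_summable: "summable (\<lambda>j. vit N M al eps (m::int^'d) j n)"
  by (rule summable_comparison_test[OF _ summable_geometric[of "rho q2"]])
     (use rho_props(1,2) v_pt in auto)

lemma v_tendsto0: "(\<lambda>J. vit N M al eps (m::int^'d) J n) \<longlonglongrightarrow> 0"
proof (rule Lim_null_comparison)
  show "\<forall>\<^sub>F J in sequentially. norm (vit N M al eps m J n) \<le> rho q2 ^ J" using v_pt by simp
  show "(\<lambda>J. rho q2 ^ J) \<longlonglongrightarrow> 0" using rho_props(1,2) by (intro LIMSEQ_power_zero) simp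
qed

definition gr :: "int^'d \<Rightarrow> int^'d \<Rightarrow> real" where
  "gr m n = eps * suminf (\<lambda>j. vit N M al eps m j n)"

lemma partial_tendsto: "(\<lambda>J. eps * (\<Sum>j<J. vit N M al eps m j n)) \<longlonglongrightarrow> gr m n"
  unfolding gr_def by (intro tendsto_mult_left summable_LIMSEQ v_summable)

lemma Op_gr: "Op N M al (gr m) n = ind m n"
proof -
  have "(\<lambda>J. Op N M al (\<lambda>n. eps * (\<Sum>j<J. vit N M al eps m j n)) n) \<longlonglongrightarrow> Op N M al (gr m) n"
    by (rule Op_tendsto) (rule partial_tendsto)
  moreover have "(\<lambda>J. Op N M al (\<lambda>n. eps * (\<Sum>j<J. vit N M al eps m j n)) n) \<longlonglongrightarrow> ind m n - 0"
    unfolding Op_partial by (intro tendsto_diff tendsto_const v_tendsto0)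
  ultimately show ?thesis using LIMSEQ_unique by fastforce
qed

lemma gr_decay:
  "\<bar>gr m n\<bar> \<le> eps / (1 - sqrt (rho q2)) *
      exp (real_of_int (l1 n m) / real (CARD('d) * N) * ln (sqrt (rho q2)))"
proof -
  define r where "r = rho q2"
  define s where "s = sqrt r"
  define R where "R = real (CARD('d) * N)"
  define C where "C = exp (real_of_int (l1 n m) / R * ln s)"
  have r0: "0 < r" "r < 1" using rho_props(1,2) by (simp_all add: r_def)
  have s0: "0 < s" "s < 1" using r0 by (simp_all add: s_def)
  have ss: "s * s = r" using r0 by (simp add: s_def)
  have R0: "R > 0" using N by (simp add: R_def)
  have C0: "0 \<le> C" by (simp add: C_def)
  have bnd: "\<bar>vit N M al eps m j n\<bar> \<le> C * s ^ j" for j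
  proof (cases "vit N M al eps m j n = 0")
    case True then show ?thesis using C0 s0 by simp
  next
    case False
    then have "l1 n m \<le> int j * int (CARD('d) * N)" by (rule v_supp)
    then have "real_of_int (l1 n m) \<le> real j * R" unfolding R_def
      by (metis of_int_le_iff of_int_mult of_int_of_nat_eq)
    then have le: "real_of_int (l1 n m) / R \<le> real j" using R0 by (simp add: divide_le_eq)
    have ls: "ln s < 0" using s0 by simp
    have "s ^ j = exp (real j * ln s)" using s0 by (simp add: exp_of_nat_mult)
    also have "\<dots> \<le> C"
    proof -
      have "real j * ln s \<le> real_of_int (l1 n m) / R * ln s"
        using mult_right_mono_neg[OF le, of "ln s"] ls by simp
      then show ?thesis unfolding C_def by (simp only: exp_le_cancel_iff)
    qed
    finally have sj: "s ^ j \<le> C" .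
    have "\<bar>vit N M al eps m j n\<bar> \<le> r ^ j" using v_pt by (simp add: r_def)
    also have "\<dots> = s ^ j * s ^ j" by (simp add: ss[symmetric] power_mult_distrib)
    also have "\<dots> \<le> C * s ^ j" using sj s0 by (intro mult_right_mono) auto
    finally show ?thesis .
  qed
  have sumg: "summable (\<lambda>j. C * s ^ j)" using s0 by (intro summable_mult summable_geometric) simp
  have "\<bar>suminf (\<lambda>j. vit N M al eps m j n)\<bar> \<le> suminf (\<lambda>j. C * s ^ j)"
    using norm_suminf_le[of "\<lambda>j. vit N M al eps m j n" "\<lambda>j. C * s ^ j"] bnd sumg by simp
  also have "\<dots> = C / (1 - s)" using s0 by (simp add: suminf_mult suminf_geometric summable_geometric)
  finally have sb: "\<bar>suminf (\<lambda>j. vit N M al eps m j n)\<bar> \<le> C / (1 - s)" .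
  have "\<bar>gr m n\<bar> = eps * \<bar>suminf (\<lambda>j. vit N M al eps m j n)\<bar>" unfolding gr_def using eps by (simp add: abs_mult)
  also have "\<dots> \<le> eps * (C / (1 - s))" using sb eps by (intro mult_left_mono) auto
  finally have "\<bar>gr m n\<bar> \<le> eps * (C / (1 - s))" .
  then show ?thesis by (simp add: C_def s_def r_def R_def del: of_nat_mult)
qed

lemma gr_sq: "(\<lambda>n. (gr m n)\<^sup>2) summable_on UNIV"
proof (rule nonneg_bdd_above_summable_on)
  show "\<And>x. x \<in> UNIV \<Longrightarrow> 0 \<le> (gr m x)\<^sup>2" by simp
  define r where "r = rho q2"
  define B where "B = eps / (1 - r)"
  have r0: "0 < r" "r < 1" using rho_props(1,2) by (simp_all add: r_def)
  have B0: "0 \<le> B" using eps r0 by (simp add: B_def)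
  have fin: "(\<Sum>n\<in>F. (gr m n)\<^sup>2) \<le> B\<^sup>2" if F: "finite F" for F
  proof -
    have P: "(\<Sum>n\<in>F. (eps * (\<Sum>j<J. vit N M al eps m j n))\<^sup>2) \<le> B\<^sup>2" for J
    proof -
      have "L2_set (\<lambda>n. eps * (\<Sum>j<J. vit N M al eps m j n)) F = eps * L2_set (\<lambda>n. \<Sum>j<J. vit N M al eps m j n) F"
        using eps by (simp add: L2_set_right_distrib)
      also have "\<dots> \<le> eps * (\<Sum>j<J. L2_set (vit N M al eps m j) F)"
        using eps by (intro mult_left_mono L2_set_sum_le) auto
      also have "\<dots> \<le> eps * (\<Sum>j<J. r ^ j)"
        using eps by (intro mult_left_mono sum_mono) (auto simp: r_def v_L2)
      also have "(\<Sum>j<J. r ^ j) \<le> suminf (\<lambda>j. r ^ j)"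
        using r0 by (intro sum_le_suminf summable_geometric) auto
      also have "\<dots> = 1 / (1 - r)" using r0 by (simp add: suminf_geometric)
      finally have L: "L2_set (\<lambda>n. eps * (\<Sum>j<J. vit N M al eps m j n)) F \<le> B"
        using eps by (simp add: B_def mult_left_mono)
      have "(\<Sum>n\<in>F. (eps * (\<Sum>j<J. vit N M al eps m j n))\<^sup>2) = (L2_set (\<lambda>n. eps * (\<Sum>j<J. vit N M al eps m j n)) F)\<^sup>2"
        unfolding L2_set_def by (simp add: sum_nonneg)
      also have "\<dots> \<le> B\<^sup>2" using L by (intro power_mono) auto
      finally show ?thesis .
    qed
    have "(\<lambda>J. \<Sum>n\<in>F. (eps * (\<Sum>j<J. vit N M al eps m j n))\<^sup>2) \<longlonglongrightarrow> (\<Sum>n\<in>F. (gr m n)\<^sup>2)"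
      by (intro tendsto_sum tendsto_power partial_tendsto)
    then show ?thesis using P by (intro LIMSEQ_le_const2) auto
  qed
  show "bdd_above (sum (\<lambda>n. (gr m n)\<^sup>2) ` {F. F \<subseteq> UNIV \<and> finite F})"
    using fin by (intro bdd_aboveI[of _ "B\<^sup>2"]) auto
qed

lemma unique0:
  fixes w :: "int^'d \<Rightarrow> real"
  assumes ws: "(\<lambda>n. (w n)\<^sup>2) summable_on UNIV" and Ow: "\<And>n. Op N M al w n = 0"
  shows "w p = 0"
proof -
  define S where "S = infsum (\<lambda>n. (w n)\<^sup>2) UNIV"
  have bnd: "\<bar>w p\<bar> \<le> rho q2 ^ J * sqrt S" for J
  proof -
    define P where "P n = eps * (\<Sum>j<J. vit N M al eps p j n)" for n
    have fP: "fsup P" unfolding P_def by (rule fsup_partial)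
    have "Sum_any (\<lambda>n. P n * Op N M al w n) = Sum_any (\<lambda>n. Op N M al P n * w n)" by (rule Op_sym[OF N fP])
    moreover have "Sum_any (\<lambda>n. P n * Op N M al w n) = 0" by (simp add: Ow)
    moreover have "Op N M al P n = ind p n - vit N M al eps p J n" for n unfolding P_def by (rule Op_partial)
    ultimately have "Sum_any (\<lambda>n. (ind p n - vit N M al eps p J n) * w n) = 0" by simp
    moreover have "Sum_any (\<lambda>n. (ind p n - vit N M al eps p J n) * w n) =
        Sum_any (\<lambda>n. ind p n * w n) - Sum_any (\<lambda>n. vit N M al eps p J n * w n)"
    proof -
      have a: "fsup (\<lambda>n. ind p n * w n)" "fsup (\<lambda>n. vit N M al eps p J n * w n)"
        by (auto intro: fsup_mult_l fsup_ind v_fsup)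
      have eq: "(\<lambda>n. (ind p n - vit N M al eps p J n) * w n) = (\<lambda>n. ind p n * w n - vit N M al eps p J n * w n)"
        by (simp add: algebra_simps)
      show ?thesis unfolding eq by (rule SA_diff[OF a])
    qed
    ultimately have wp: "w p = Sum_any (\<lambda>n. vit N M al eps p J n * w n)" by (simp add: SA_ind_mult)
    define F where "F = {n. vit N M al eps p J n \<noteq> 0}"
    have fF: "finite F" unfolding F_def by (rule v_fsup)
    have "Sum_any (\<lambda>n. vit N M al eps p J n * w n) = (\<Sum>n\<in>F. vit N M al eps p J n * w n)"
      using fF by (rule SA_sup) (auto simp: F_def)
    then have "\<bar>w p\<bar> \<le> (\<Sum>n\<in>F. \<bar>vit N M al eps p J n\<bar> * \<bar>w n\<bar>)"
      using wp by (simp add: sum_abs[THEN order_trans] abs_mult)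
    also have "\<dots> \<le> L2_set (vit N M al eps p J) F * L2_set w F" by (rule L2_set_mult_ineq)
    also have "\<dots> \<le> rho q2 ^ J * sqrt S"
    proof (rule mult_mono)
      show "L2_set (vit N M al eps p J) F \<le> rho q2 ^ J" by (rule v_L2)
      have "(\<Sum>n\<in>F. (w n)\<^sup>2) \<le> S" unfolding S_def using ws fF by (intro finite_sum_le_infsum) auto
      then show "L2_set w F \<le> sqrt S" unfolding L2_set_def by simp
      show "0 \<le> rho q2 ^ J" using rho_props(1) by simp
      show "0 \<le> L2_set w F" by simp
    qed
    finally show ?thesis .
  qed
  have "(\<lambda>J. rho q2 ^ J * sqrt S) \<longlonglongrightarrow> 0 * sqrt S"
    using rho_props(1,2) by (intro tendsto_mult_right LIMSEQ_power_zero) simp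
  then have "\<bar>w p\<bar> \<le> 0" using bnd by (intro LIMSEQ_le_const) auto
  then show ?thesis by simp
qed

end

lemma powi_neg_lt1: "L > 1 \<Longrightarrow> j \<ge> 1 \<Longrightarrow> real L powi (- int j) < 1"
proof -
  assume L: "L > 1" and j: "j \<ge> 1"
  have "real L powi (- int j) = inverse (real L ^ j)" by (simp add: power_int_minus)
  moreover have "1 < real L ^ j" using L j by (intro one_less_power) auto
  ultimately show ?thesis by (simp add: inverse_less_1_iff)
qed

lemma dist_lat:
  fixes n m :: "int^'d"
  assumes N: "N > 0"
  shows "dist (lat_pt (1 / real N) n) (lat_pt (1 / real N) m) \<le> real_of_int (l1 n m) / real N"
proof -
  have "dist (lat_pt (1 / real N) n) (lat_pt (1 / real N) m) = norm (lat_pt (1 / real N) n - lat_pt (1 / real N) m)"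
    by (simp add: dist_norm)
  also have "\<dots> \<le> (\<Sum>\<mu>\<in>UNIV. \<bar>(lat_pt (1 / real N) n - lat_pt (1 / real N) m) $ \<mu>\<bar>)" by (rule norm_le_l1_cart)
  also have "\<dots> = (\<Sum>\<mu>\<in>UNIV. \<bar>real_of_int (n$\<mu> - m$\<mu>)\<bar> / real N)"
    by (intro sum.cong refl) (simp add: lat_pt_def abs_divide flip: diff_divide_distrib)
  also have "\<dots> = real_of_int (l1 n m) / real N"
    by (simp add: l1_def sum_divide_distrib)
  finally show ?thesis .
qed

theorem mainTheorem13:
  fixes L k :: nat and a mu0 :: real
  assumes "odd L" and "L > 1" and "k \<ge> 1" and "0 < a" and "a \<le> 1" and "mu0 \<ge> 0"
  shows "\<exists>c c1. c > 0 \<and> c1 > 0 \<and>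
           (\<forall>n m :: int^'d. \<bar>Gker L k a mu0 n m\<bar>
               \<le> c * exp (- c1 * dist (lat_pt (eta L k) n) (lat_pt (eta L k) m)))"
proof -
  define N where "N = L ^ k"
  have L0: "L > 0" using assms(2) by simp
  have N0: "N > 0" using L0 by (simp add: N_def)
  define M where "M = mu_k L k mu0"
  define al where "al = a_k L k a"
  have M0: "M \<ge> 0" using assms(6) by (simp add: M_def mu_k_def)
  have al0: "al > 0"
  proof -
    have a1: "real L powi (- int 2) < 1" by (rule powi_neg_lt1) (use assms(2) in auto)
    have a2: "real L powi (- int (2 * k)) < 1" by (rule powi_neg_lt1) (use assms(2,3) in auto)
    have "- 2 * int k = - int (2 * k)" by simp
    then show ?thesis using a1 a2 assms(4) by (simp add: al_def a_k_def)
  qed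
  obtain eps q2 where eps: "eps > 0" and q20: "q2 \<ge> 0" and q21: "q2 < 1"
    and contr: "\<And>f::int^'d \<Rightarrow> real. fsup f \<Longrightarrow>
            Sum_any (\<lambda>n. (Tst N M al eps f n)\<^sup>2) \<le> q2 * Sum_any (\<lambda>n. (f n)\<^sup>2)"
    using contraction[OF N0 M0 al0] by blast
  note prem = N0 eps q20 q21 contr
  define D where "D = real N ^ CARD('d)"
  have D0: "D > 0" using N0 by (simp add: D_def)
  define G0 where "G0 m n = D * gr N M al eps m n" for m n :: "int^'d"
  have G0m: "G0 m = (\<lambda>n. D * gr N M al eps m n)" for m by (rule ext) (simp add: G0_def)
  have eta_eq: "eta L k = 1 / real N" by (simp add: eta_def N_def)
  have Aop_G: "Aop L k a mu0 (G0 m) = delta_eta (eta L k) m" for m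
  proof
    fix n
    have "Aop L k a mu0 (G0 m) n = Op N M al (\<lambda>n. D * gr N M al eps m n) n"
      by (simp add: Aop_eq[OF L0] N_def M_def al_def G0m)
    also have "\<dots> = D * ind m n" by (simp add: Op_cmult Op_gr[OF prem])
    also have "\<dots> = delta_eta (eta L k) m n" by (simp add: delta_eq[OF L0] D_def N_def ind_def)
    finally show "Aop L k a mu0 (G0 m) n = delta_eta (eta L k) m n" .
  qed
  have sq_G: "sq_summable (G0 m)" for m
  proof -
    have "(\<lambda>n. D\<^sup>2 * (gr N M al eps m n)\<^sup>2) summable_on UNIV"
      by (intro summable_on_cmult_right gr_sq[OF prem])
    then show ?thesis unfolding sq_summable_def G0_def by (simp add: power_mult_distrib)
  qed
  have uniq: "u = G0 m" if u: "sq_summable u" "Aop L k a mu0 u = delta_eta (eta L k) m" for u m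
  proof
    fix p
    define w where "w n = u n - G0 m n" for n
    have ws: "(\<lambda>n. (w n)\<^sup>2) summable_on UNIV"
    proof (rule summable_on_comparison_test)
      show "(\<lambda>n. 2 * (u n)\<^sup>2 + 2 * (G0 m n)\<^sup>2) summable_on UNIV"
        using u(1) sq_G[of m] unfolding sq_summable_def
        by (intro summable_on_add summable_on_cmult_right)
      show "(w n)\<^sup>2 \<le> 2 * (u n)\<^sup>2 + 2 * (G0 m n)\<^sup>2" for n
      proof -
        have "0 \<le> (u n + G0 m n)\<^sup>2" by simp
        then show ?thesis by (simp add: w_def power2_eq_square algebra_simps)
      qed
      show "0 \<le> (w n)\<^sup>2" for n by simp
    qed
    have Ow: "Op N M al w n = 0" for n
    proof -
      have "Op N M al w n = Op N M al u n - Op N M al (G0 m) n" unfolding w_def by (rule Op_diff)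
      also have "\<dots> = Aop L k a mu0 u n - Aop L k a mu0 (G0 m) n"
        by (simp add: Aop_eq[OF L0] N_def M_def al_def)
      also have "\<dots> = 0" using u(2) Aop_G[of m] by simp
      finally show ?thesis .
    qed
    have "w p = 0" by (rule unique0[OF prem ws Ow])
    then show "u p = G0 m p" by (simp add: w_def)
  qed
  have Gk: "Gker L k a mu0 n m = G0 m n" for n m :: "int^'d"
  proof -
    have "(THE g. sq_summable g \<and> Aop L k a mu0 g = delta_eta (eta L k) m) = G0 m"
      by (rule the_equality) (use sq_G Aop_G uniq in auto)
    then show ?thesis by (simp add: Gker_def)
  qed
  define s where "s = sqrt (rho q2)"
  define R where "R = real (CARD('d) * N)"
  have r0: "0 < rho q2" "rho q2 < 1" using rho_props[OF prem] by auto
  have s0: "0 < s" "s < 1" using r0 by (simp_all add: s_def)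
  have R0: "R > 0" using N0 by (simp add: R_def)
  define c where "c = D * (eps / (1 - s))"
  define c1 where "c1 = - ln s * real N / R"
  have c0: "c > 0" using D0 eps s0 by (simp add: c_def)
  have "ln s < 0" using s0 by simp
  then have c10: "c1 > 0" unfolding c1_def using R0 N0 by (intro divide_pos_pos mult_pos_pos) auto
  have main: "\<bar>Gker L k a mu0 n m\<bar> \<le> c * exp (- c1 * dist (lat_pt (eta L k) n) (lat_pt (eta L k) m))"
    for n m :: "int^'d"
  proof -
    have "\<bar>Gker L k a mu0 n m\<bar> = D * \<bar>gr N M al eps m n\<bar>" using D0 by (simp add: Gk G0_def abs_mult)
    also have "\<dots> \<le> D * (eps / (1 - s) * exp (real_of_int (l1 n m) / R * ln s))"
      using gr_decay[OF prem, of m n] D0 by (intro mult_left_mono) (simp_all add: s_def R_def)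
    also have "\<dots> \<le> c * exp (- c1 * dist (lat_pt (eta L k) n) (lat_pt (eta L k) m))"
    proof -
      have dl: "dist (lat_pt (eta L k) n) (lat_pt (eta L k) m) \<le> real_of_int (l1 n m) / real N"
        unfolding eta_eq by (rule dist_lat[OF N0])
      have ls: "ln s < 0" using s0 by simp
      have "real N * dist (lat_pt (eta L k) n) (lat_pt (eta L k) m) \<le> real_of_int (l1 n m)"
        using dl N0 by (simp add: field_simps)
      then have h: "real N * dist (lat_pt (eta L k) n) (lat_pt (eta L k) m) / R \<le> real_of_int (l1 n m) / R"
        using R0 by (simp add: divide_right_mono)
      have "real_of_int (l1 n m) / R * ln s \<le> real N * dist (lat_pt (eta L k) n) (lat_pt (eta L k) m) / R * ln s"
        using mult_right_mono_neg[OF h, of "ln s"] ls by simp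
      also have "\<dots> = - c1 * dist (lat_pt (eta L k) n) (lat_pt (eta L k) m)" by (simp add: c1_def)
      finally have ex: "exp (real_of_int (l1 n m) / R * ln s) \<le> exp (- c1 * dist (lat_pt (eta L k) n) (lat_pt (eta L k) m))"
        by simp
      have "D * (eps / (1 - s)) * exp (real_of_int (l1 n m) / R * ln s) \<le> D * (eps / (1 - s)) * exp (- c1 * dist (lat_pt (eta L k) n) (lat_pt (eta L k) m))"
        by (rule mult_left_mono[OF ex]) (use D0 eps s0 in simp)
      then show ?thesis by (simp only: c_def mult.assoc)
    qed
    finally show ?thesis .
  qed
  show ?thesis using c0 c10 main by blast
qed

end
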